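(* Let $n\ge1$, let $B_1,\dots,B_n$ be independent real-valued service times with finite means $\mu_i$ and variances, let $\omega\in(0,1)$, and assume $B_1\le_{\mathrm{dil}}\cdots\le_{\mathrm{dil}}B_n$. Suppose $X_i:=B_i-\mu_i$ has a density $f_i$. Set $g_i(x)=\min\{f_i(x),f_i(-x)\}$, $h_i=f_i-g_i$, $p_i=\int_{\mathbb R}h_i(x)\,dx$. Let $(A_i,J_i)$, $i=1,\dots,n$, be independent across $i$, where $A_i$ has density $h_i/p_i$ (if $p_i>0$), $J_i$ is Bernoulli with $\mathbb P(J_i=1)=p_i$, and $A_i,J_i$ are independent (with $A_iJ_i:=0$ if $p_i=0$). Then $$\varrho_\omega\le 2+2\max\Bigl\{\frac{\mathbb E|A_1J_1+\cdots+A_kJ_k|}{\mathbb E|X_1+\cdots+X_k|}:k=1,\dots,n\Bigr\},$$ where $\varrho_\omega=C(\mathrm{Id},\boldsymbol\mu,\omega)/\min_{\tau\in\mathsf S_n}C(\tau,\boldsymbol\mu,\omega)$.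
   Context: Appointment model: a sequence is a permutation $\tau\in\mathsf S_n$ of $\{1,\dots,n\}$, $\tau(i)$ being the patient in appointment slot $i$. A schedule is a vector $\boldsymbol x=(x_1,\dots,x_n)$, where $x_j$ is the interarrival time between patient $j$ and the next patient. Waiting times $W_i$ and idle times $I_i$ of slot $i$ are given by $W_1=I_1=0$ and $W_{i+1}=(W_i+B_{\tau(i)}-x_{\tau(i)})^+$, $I_{i+1}=(W_i+B_{\tau(i)}-x_{\tau(i)})^-$, where $a^+=\max\{0,a\}$, $a^-=\max\{0,-a\}$. The cost is $C(\tau,\boldsymbol x,\omega)=\omega\sum_{i=1}^n\mathbb E I_i+(1-\omega)\sum_{i=1}^n\mathbb E W_i$. The mean-based schedule is $\boldsymbol\mu=(\mu_1,\dots,\mu_n)$, and $\mathrm{Id}$ is the identity permutation. $A\le_{\mathrm{cx}}B$ means $\mathbb E\phi(A)\le\mathbb E\phi(B)$ for all convex $\phi$ for which the expectations exist; $A\le_{\mathrm{dil}}B$ means $A-\mathbb EA\le_{\mathrm{cx}}B-\mathbb EB$. *)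

theory Defs
  imports "HOL-Probability.Probability"
begin

text \<open>Waiting time of slot i (slots numbered 1..n). Given sequence tau
  (tau i = patient in slot i), realized service times b (b j = service time of
  patient j) and schedule x (x j = interarrival time after patient j):
  W_1 = 0, W_(i+1) = (W_i + b (tau i) - x (tau i))^+.\<close>
fun wait :: "(nat \<Rightarrow> nat) \<Rightarrow> (nat \<Rightarrow> real) \<Rightarrow> (nat \<Rightarrow> real) \<Rightarrow> nat \<Rightarrow> real" where
  "wait \<tau> b x 0 = 0"
| "wait \<tau> b x (Suc 0) = 0"
| "wait \<tau> b x (Suc (Suc i)) =
     max 0 (wait \<tau> b x (Suc i) + b (\<tau> (Suc i)) - x (\<tau> (Suc i)))"

fun idle :: "(nat \<Rightarrow> nat) \<Rightarrow> (nat \<Rightarrow> real) \<Rightarrow> (nat \<Rightarrow> real) \<Rightarrow> nat \<Rightarrow> real" where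
  "idle \<tau> b x 0 = 0"
| "idle \<tau> b x (Suc 0) = 0"
| "idle \<tau> b x (Suc (Suc i)) =
     max 0 (- (wait \<tau> b x (Suc i) + b (\<tau> (Suc i)) - x (\<tau> (Suc i))))"

definition cost :: "'a measure \<Rightarrow> (nat \<Rightarrow> 'a \<Rightarrow> real) \<Rightarrow> nat \<Rightarrow> (nat \<Rightarrow> nat)
    \<Rightarrow> (nat \<Rightarrow> real) \<Rightarrow> real \<Rightarrow> real" where
  "cost M B n \<tau> x \<omega> =
     \<omega> * (\<Sum>i=1..n. \<integral>s. idle \<tau> (\<lambda>j. B j s) x i \<partial>M)
     + (1 - \<omega>) * (\<Sum>i=1..n. \<integral>s. wait \<tau> (\<lambda>j. B j s) x i \<partial>M)"

definition cx_le :: "'a measure \<Rightarrow> ('a \<Rightarrow> real) \<Rightarrow> 'b measure \<Rightarrow> ('b \<Rightarrow> real) \<Rightarrow> bool" where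
  "cx_le M X N Y \<longleftrightarrow>
     (\<forall>\<phi>::real \<Rightarrow> real. convex_on UNIV \<phi> \<longrightarrow>
        integrable M (\<lambda>s. \<phi> (X s)) \<longrightarrow> integrable N (\<lambda>s. \<phi> (Y s)) \<longrightarrow>
        (\<integral>s. \<phi> (X s) \<partial>M) \<le> (\<integral>s. \<phi> (Y s) \<partial>N))"

definition dil_le :: "'a measure \<Rightarrow> ('a \<Rightarrow> real) \<Rightarrow> 'b measure \<Rightarrow> ('b \<Rightarrow> real) \<Rightarrow> bool" where
  "dil_le M X N Y \<longleftrightarrow>
     cx_le M (\<lambda>s. X s - (\<integral>t. X t \<partial>M)) N (\<lambda>s. Y s - (\<integral>t. Y t \<partial>N))"

end

theory Submission
  imports Defs
begin


locale appt = M: prob_space M + N: prob_space N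
  for M :: "'a measure" and N :: "'b measure" +
  fixes B :: "nat \<Rightarrow> 'a \<Rightarrow> real" and n :: nat and \<omega> :: real
    and \<mu> :: "nat \<Rightarrow> real" and f g h :: "nat \<Rightarrow> real \<Rightarrow> real" and p :: "nat \<Rightarrow> real"
    and A J :: "nat \<Rightarrow> 'b \<Rightarrow> real"
  assumes n1: "n \<ge> 1"
    and B_rv: "\<And>i. i \<in> {1..n} \<Longrightarrow> B i \<in> borel_measurable M"
    and B_indep: "prob_space.indep_vars M (\<lambda>_. borel) B {1..n}"
    and B_mean: "\<And>i. i \<in> {1..n} \<Longrightarrow> integrable M (B i)"
    and \<mu>_def: "\<And>i. \<mu> i = (\<integral>s. B i s \<partial>M)"
    and \<omega>: "0 < \<omega>" "\<omega> < 1"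
    and dil: "\<And>i. i \<in> {1..<n} \<Longrightarrow> dil_le M (B i) M (B (Suc i))"
    and f_nonneg: "\<And>i x. i \<in> {1..n} \<Longrightarrow> 0 \<le> f i x"
    and f_meas: "\<And>i. i \<in> {1..n} \<Longrightarrow> f i \<in> borel_measurable borel"
    and f_dens: "\<And>i. i \<in> {1..n} \<Longrightarrow>
        distributed M lborel (\<lambda>s. B i s - \<mu> i) (\<lambda>x. ennreal (f i x))"
    and g_def: "\<And>i x. g i x = min (f i x) (f i (- x))"
    and h_def: "\<And>i x. h i x = f i x - g i x"
    and p_def: "\<And>i. p i = (\<integral>x. h i x \<partial>lborel)"
    and AJ_rv: "\<And>i. i \<in> {1..n} \<Longrightarrow> A i \<in> borel_measurable N \<and> J i \<in> borel_measurable N"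
    and AJ_indep: "prob_space.indep_vars N (\<lambda>_. borel) (\<lambda>i s. (A i s, J i s)) {1..n}"
    and A_J_indep: "\<And>i. i \<in> {1..n} \<Longrightarrow> prob_space.indep_var N borel (A i) borel (J i)"
    and A_dens: "\<And>i. i \<in> {1..n} \<Longrightarrow> p i > 0 \<Longrightarrow>
        distributed N lborel (A i) (\<lambda>x. ennreal (h i x / p i))"
    and J_bern: "\<And>i. i \<in> {1..n} \<Longrightarrow> (AE s in N. J i s = 0 \<or> J i s = 1)"
    and J_prob: "\<And>i. i \<in> {1..n} \<Longrightarrow> measure N {s \<in> space N. J i s = 1} = p i"
begin

definition X where "X i s = B i s - \<mu> i"

lemma X_meas[measurable]: "i \<in> {1..n} \<Longrightarrow> X i \<in> borel_measurable M"
  unfolding X_def using B_rv by measurable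

lemma X_int: "i \<in> {1..n} \<Longrightarrow> integrable M (X i)"
  unfolding X_def using B_mean by auto

lemma X_mean: "i \<in> {1..n} \<Longrightarrow> (\<integral>s. X i s \<partial>M) = 0"
  unfolding X_def using B_mean by (simp add: \<mu>_def M.prob_space)

lemma distrX: "i \<in> {1..n} \<Longrightarrow> distr M lborel (X i) = density lborel (\<lambda>x. ennreal (f i x))"
  using f_dens[of i] unfolding distributed_def X_def[abs_def] by auto

lemma distrX_borel: "i \<in> {1..n} \<Longrightarrow> distr M borel (X i) = density lborel (\<lambda>x. ennreal (f i x))"
  by (subst distrX[symmetric], simp, intro distr_cong) auto

lemma f_meas'[measurable]: "i \<in> {1..n} \<Longrightarrow> f i \<in> borel_measurable borel" by (rule f_meas)

lemma f_nn_int: "i \<in> {1..n} \<Longrightarrow> (\<integral>\<^sup>+x. ennreal (f i x) \<partial>lborel) = 1"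
proof -
  assume i: "i \<in> {1..n}"
  have "emeasure (density lborel (\<lambda>x. ennreal (f i x))) UNIV = emeasure (distr M lborel (X i)) UNIV"
    using distrX[OF i] by simp
  also have "\<dots> = 1" using i by (subst emeasure_distr) (auto simp: M.emeasure_space_1)
  finally show ?thesis using i by (subst (asm) emeasure_density) auto
qed

lemma f_integrable: "i \<in> {1..n} \<Longrightarrow> integrable lborel (f i)"
  by (rule integrableI_nonneg) (auto simp: f_nonneg f_nn_int)

lemma f_int: "i \<in> {1..n} \<Longrightarrow> (\<integral>x. f i x \<partial>lborel) = 1"
proof -
  assume i: "i \<in> {1..n}"
  have "ennreal (\<integral>x. f i x \<partial>lborel) = 1"
    using nn_integral_eq_integral[OF f_integrable[OF i]] f_nn_int[OF i] f_nonneg[OF i] by auto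
  then show ?thesis by simp
qed

lemma xf_integrable: "i \<in> {1..n} \<Longrightarrow> integrable lborel (\<lambda>x. f i x * x)"
proof -
  assume i: "i \<in> {1..n}"
  have "integrable (distr M lborel (X i)) (\<lambda>x. x)"
    using i X_int[OF i] by (subst integrable_distr_eq) auto
  then have "integrable (density lborel (\<lambda>x. ennreal (f i x))) (\<lambda>x. x)" using distrX[OF i] by simp
  then show ?thesis using i f_nonneg by (subst (asm) integrable_density) auto
qed

lemma xf_int: "i \<in> {1..n} \<Longrightarrow> (\<integral>x. f i x * x \<partial>lborel) = 0"
proof -
  assume i: "i \<in> {1..n}"
  have "(\<integral>x. x \<partial>distr M lborel (X i)) = 0"
    using i X_mean[OF i] by (subst integral_distr) auto
  then have "(\<integral>x. x \<partial>density lborel (\<lambda>x. ennreal (f i x))) = 0" using distrX[OF i] by simp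
  then show ?thesis using i f_nonneg by (subst (asm) integral_density) auto
qed

lemma g_meas[measurable]: "i \<in> {1..n} \<Longrightarrow> g i \<in> borel_measurable borel"
proof -
  assume i: "i \<in> {1..n}"
  have "g i = (\<lambda>x. min (f i x) (f i (- x)))" by (auto simp: g_def)
  then show ?thesis using i by simp
qed

lemma h_meas[measurable]: "i \<in> {1..n} \<Longrightarrow> h i \<in> borel_measurable borel"
proof -
  assume i: "i \<in> {1..n}"
  have "h i = (\<lambda>x. f i x - g i x)" by (auto simp: h_def)
  then show ?thesis using i by simp
qed

lemma g_nonneg: "i \<in> {1..n} \<Longrightarrow> 0 \<le> g i x" by (simp add: g_def f_nonneg)
lemma h_nonneg: "0 \<le> h i x" by (simp add: h_def g_def)
lemma g_le: "g i x \<le> f i x" by (simp add: g_def)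
lemma h_le: "i \<in> {1..n} \<Longrightarrow> h i x \<le> f i x" by (simp add: h_def g_nonneg)
lemma g_sym: "g i (- x) = g i x" by (simp add: g_def)
lemma fgh: "f i x = g i x + h i x" by (simp add: h_def)

lemma g_integrable: "i \<in> {1..n} \<Longrightarrow> integrable lborel (g i)"
  by (rule Bochner_Integration.integrable_bound[OF f_integrable])
     (auto intro!: AE_I2 simp: g_nonneg g_le f_nonneg)

lemma h_integrable: "i \<in> {1..n} \<Longrightarrow> integrable lborel (h i)"
  by (rule Bochner_Integration.integrable_bound[OF f_integrable])
     (auto intro!: AE_I2 simp: h_nonneg h_le f_nonneg)

lemma xg_integrable: "i \<in> {1..n} \<Longrightarrow> integrable lborel (\<lambda>x. g i x * x)"
  by (rule Bochner_Integration.integrable_bound[OF xf_integrable])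
     (auto intro!: AE_I2 mult_right_mono simp: g_nonneg g_le abs_mult f_nonneg)

lemma xh_integrable: "i \<in> {1..n} \<Longrightarrow> integrable lborel (\<lambda>x. h i x * x)"
  by (rule Bochner_Integration.integrable_bound[OF xf_integrable])
     (auto intro!: AE_I2 mult_right_mono simp: h_nonneg h_le abs_mult f_nonneg)

lemma xg_int: "i \<in> {1..n} \<Longrightarrow> (\<integral>x. g i x * x \<partial>lborel) = 0"
proof -
  assume i: "i \<in> {1..n}"
  have "(\<integral>x. g i x * x \<partial>lborel) = \<bar>-1\<bar> *\<^sub>R (\<integral>x. g i (0 + -1 * x) * (0 + -1 * x) \<partial>lborel)"
    by (rule lborel_integral_real_affine) simp
  also have "\<dots> = - (\<integral>x. g i x * x \<partial>lborel)" by (simp add: g_sym)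
  finally show ?thesis by simp
qed

lemma xh_int: "i \<in> {1..n} \<Longrightarrow> (\<integral>x. h i x * x \<partial>lborel) = 0"
proof -
  assume i: "i \<in> {1..n}"
  have "(\<integral>x. h i x * x \<partial>lborel) = (\<integral>x. f i x * x - g i x * x \<partial>lborel)"
    by (simp add: h_def algebra_simps)
  also have "\<dots> = 0" using i xf_integrable xg_integrable xf_int xg_int by simp
  finally show ?thesis .
qed

lemma g_int: "i \<in> {1..n} \<Longrightarrow> (\<integral>x. g i x \<partial>lborel) = 1 - p i"
proof -
  assume i: "i \<in> {1..n}"
  have "p i = (\<integral>x. f i x - g i x \<partial>lborel)" by (simp add: p_def h_def)
  also have "\<dots> = 1 - (\<integral>x. g i x \<partial>lborel)" using i f_integrable g_integrable f_int by simp
  finally show ?thesis by simp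
qed

lemma p_nonneg: "i \<in> {1..n} \<Longrightarrow> 0 \<le> p i"
  unfolding p_def by (rule integral_nonneg_AE) (simp add: h_nonneg)

lemma p_le1: "i \<in> {1..n} \<Longrightarrow> p i \<le> 1"
proof -
  assume i: "i \<in> {1..n}"
  have "0 \<le> (\<integral>x. g i x \<partial>lborel)" by (rule integral_nonneg_AE) (use i in \<open>auto intro!: AE_I2 simp: g_nonneg\<close>)
  then show ?thesis using g_int[OF i] by simp
qed

end


abbreviation OmS :: "(real \<times> real \<times> real \<times> bool) measure" where
  "OmS \<equiv> borel \<Otimes>\<^sub>M (borel \<Otimes>\<^sub>M (borel \<Otimes>\<^sub>M count_space UNIV))"

definition Xf :: "real \<times> real \<times> real \<times> bool \<Rightarrow> real" where
  "Xf w = (if snd (snd (snd w)) then fst (snd w) else fst w)"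
definition Uf :: "real \<times> real \<times> real \<times> bool \<Rightarrow> real" where
  "Uf w = (if snd (snd (snd w)) then fst (snd (snd w)) else 0)"
definition Zf :: "real \<times> real \<times> real \<times> bool \<Rightarrow> real" where
  "Zf w = (if snd (snd (snd w)) then fst (snd w) - fst (snd (snd w)) else fst w)"

lemma Xf_meas[measurable]: "Xf \<in> borel_measurable OmS"
  unfolding Xf_def by measurable
lemma Uf_meas[measurable]: "Uf \<in> borel_measurable OmS"
  unfolding Uf_def by measurable
lemma Zf_meas[measurable]: "Zf \<in> borel_measurable OmS"
  unfolding Zf_def by measurable
lemma Zf_eq: "Zf w = Xf w - Uf w"
  by (simp add: Zf_def Xf_def Uf_def)

lemma integrable_return0: "integrable (return borel (0::real)) (\<lambda>x. x)"
  apply (rule integrableI_bounded)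
   apply (subst measurable_cong_sets[OF sets_return refl], simp)
  by (subst nn_integral_return) auto

context appt begin

definition Yd :: "nat \<Rightarrow> real measure" where
  "Yd i = (if i \<in> {1..n} \<and> p i < 1 then density lborel (\<lambda>x. ennreal (g i x / (1 - p i)))
           else return borel 0)"
definition Ad :: "nat \<Rightarrow> real measure" where
  "Ad i = (if i \<in> {1..n} \<and> 0 < p i then density lborel (\<lambda>x. ennreal (h i x / p i))
           else return borel 0)"
definition Om2 where "Om2 i = Ad i \<Otimes>\<^sub>M measure_pmf (bernoulli_pmf (p i))"
definition Om1 where "Om1 i = Ad i \<Otimes>\<^sub>M Om2 i"
definition Om where "Om i = Yd i \<Otimes>\<^sub>M Om1 i"

lemma sets_Yd: "sets (Yd i) = sets borel" by (simp add: Yd_def)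
lemma sets_Ad: "sets (Ad i) = sets borel" by (simp add: Ad_def)
lemma sets_Om2: "sets (Om2 i) = sets (borel \<Otimes>\<^sub>M count_space UNIV)"
  unfolding Om2_def by (intro sets_pair_measure_cong sets_Ad sets_measure_pmf_count_space)
lemma sets_Om1: "sets (Om1 i) = sets (borel \<Otimes>\<^sub>M (borel \<Otimes>\<^sub>M count_space UNIV))"
  unfolding Om1_def by (intro sets_pair_measure_cong sets_Ad sets_Om2)
lemma sets_Om: "sets (Om i) = sets OmS"
  unfolding Om_def by (intro sets_pair_measure_cong sets_Yd sets_Om1)

lemma meas_Yd[simp]: "measurable (Yd i) K = measurable borel K"
  by (rule measurable_cong_sets[OF sets_Yd refl])
lemma meas_Ad[simp]: "measurable (Ad i) K = measurable borel K"
  by (rule measurable_cong_sets[OF sets_Ad refl])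
lemma meas_Om2[simp]: "measurable (Om2 i) K = measurable (borel \<Otimes>\<^sub>M count_space UNIV) K"
  by (rule measurable_cong_sets[OF sets_Om2 refl])
lemma meas_Om1[simp]: "measurable (Om1 i) K = measurable (borel \<Otimes>\<^sub>M (borel \<Otimes>\<^sub>M count_space UNIV)) K"
  by (rule measurable_cong_sets[OF sets_Om1 refl])
lemma meas_Om[simp]: "measurable (Om i) K = measurable OmS K"
  by (rule measurable_cong_sets[OF sets_Om refl])
lemma meas_Om'[simp]: "measurable (Yd i \<Otimes>\<^sub>M Om1 i) K = measurable OmS K"
  by (fold Om_def) (rule meas_Om)
lemma meas_Om1'[simp]: "measurable (Ad i \<Otimes>\<^sub>M Om2 i) K = measurable (borel \<Otimes>\<^sub>M (borel \<Otimes>\<^sub>M count_space UNIV)) K"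
  by (fold Om1_def) (rule meas_Om1)
lemma meas_Om2'[simp]: "measurable (Ad i \<Otimes>\<^sub>M measure_pmf (bernoulli_pmf (p i))) K = measurable (borel \<Otimes>\<^sub>M count_space UNIV) K"
  by (fold Om2_def) (rule meas_Om2)
lemma meas_bAd[simp]: "measurable (borel \<Otimes>\<^sub>M Ad i) K = measurable (borel \<Otimes>\<^sub>M borel) K"
  by (rule measurable_cong_sets[OF sets_pair_measure_cong[OF refl sets_Ad] refl])
lemma space_Om: "space (Om i) = space OmS"
  using sets_Om by (rule sets_eq_imp_space_eq)

lemma prob_Yd: "prob_space (Yd i)"
proof (cases "i \<in> {1..n} \<and> p i < 1")
  case True
  then have i: "i \<in> {1..n}" and p: "p i < 1" by auto
  have int: "integrable lborel (\<lambda>x. g i x / (1 - p i))"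
    using g_integrable[OF i] by simp
  have "(\<integral>\<^sup>+x. ennreal (g i x / (1 - p i)) \<partial>lborel) = ennreal (\<integral>x. g i x / (1 - p i) \<partial>lborel)"
    using int i p by (intro nn_integral_eq_integral) (auto intro!: AE_I2 simp: g_nonneg)
  also have "\<dots> = 1" using g_int[OF i] p by simp
  finally have "(\<integral>\<^sup>+x. ennreal (g i x / (1 - p i)) \<partial>lborel) = 1" .
  then show ?thesis using True i
    by (auto simp: Yd_def intro!: prob_spaceI simp: emeasure_density)
next
  case False
  then show ?thesis unfolding Yd_def if_not_P[OF False] by (simp add: prob_space_return)
qed

lemma prob_Ad: "prob_space (Ad i)"
proof (cases "i \<in> {1..n} \<and> 0 < p i")
  case True
  then have i: "i \<in> {1..n}" and p: "0 < p i" by auto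
  have int: "integrable lborel (\<lambda>x. h i x / p i)"
    using h_integrable[OF i] by simp
  have "(\<integral>\<^sup>+x. ennreal (h i x / p i) \<partial>lborel) = ennreal (\<integral>x. h i x / p i \<partial>lborel)"
    using int i p by (intro nn_integral_eq_integral) (auto intro!: AE_I2 simp: h_nonneg)
  also have "\<dots> = 1" using p by (simp add: p_def)
  finally have "(\<integral>\<^sup>+x. ennreal (h i x / p i) \<partial>lborel) = 1" .
  then show ?thesis using True i
    by (auto simp: Ad_def intro!: prob_spaceI simp: emeasure_density)
next
  case False
  then show ?thesis unfolding Ad_def if_not_P[OF False] by (simp add: prob_space_return)
qed

lemma prob_Om2: "prob_space (Om2 i)"
  unfolding Om2_def by (intro prob_space_pair prob_Ad prob_space_measure_pmf)
lemma prob_Om1: "prob_space (Om1 i)"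
  unfolding Om1_def by (intro prob_space_pair prob_Ad prob_Om2)
lemma prob_Om: "prob_space (Om i)"
  unfolding Om_def by (intro prob_space_pair prob_Yd prob_Om1)

lemma g_AE0: "i \<in> {1..n} \<Longrightarrow> p i = 1 \<Longrightarrow> AE x in lborel. g i x = 0"
  using g_int[of i] g_integrable[of i]
  by (subst integral_nonneg_eq_0_iff_AE[symmetric]) (auto intro!: AE_I2 simp: g_nonneg)

lemma h_AE0: "i \<in> {1..n} \<Longrightarrow> p i = 0 \<Longrightarrow> AE x in lborel. h i x = 0"
  using p_def[of i] h_integrable[of i]
  by (subst integral_nonneg_eq_0_iff_AE[symmetric]) (auto intro!: AE_I2 simp: h_nonneg)

lemma Yd_int:
  assumes i: "i \<in> {1..n}" and F[measurable]: "F \<in> borel_measurable borel"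
  shows "ennreal (1 - p i) * (\<integral>\<^sup>+y. F y \<partial>Yd i) = (\<integral>\<^sup>+x. ennreal (g i x) * F x \<partial>lborel)"
proof (cases "p i < 1")
  case True
  have "ennreal (1 - p i) * (\<integral>\<^sup>+y. F y \<partial>Yd i)
      = ennreal (1 - p i) * (\<integral>\<^sup>+x. ennreal (g i x / (1 - p i)) * F x \<partial>lborel)"
    using True i by (simp add: Yd_def nn_integral_density)
  also have "\<dots> = (\<integral>\<^sup>+x. ennreal (1 - p i) * (ennreal (g i x / (1 - p i)) * F x) \<partial>lborel)"
    using i by (subst nn_integral_cmult) auto
  also have "\<dots> = (\<integral>\<^sup>+x. ennreal (g i x) * F x \<partial>lborel)"
  proof (intro nn_integral_cong)
    fix x
    have "ennreal (1 - p i) * ennreal (g i x / (1 - p i)) = ennreal (g i x)"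
      using True i g_nonneg[OF i] by (subst ennreal_mult[symmetric]) auto
    then show "ennreal (1 - p i) * (ennreal (g i x / (1 - p i)) * F x) = ennreal (g i x) * F x"
      by (simp add: mult.assoc[symmetric])
  qed
  finally show ?thesis .
next
  case False
  then have p: "p i = 1" using p_le1[OF i] by simp
  have "(\<integral>\<^sup>+x. ennreal (g i x) * F x \<partial>lborel) = (\<integral>\<^sup>+x. 0 \<partial>(lborel::real measure))"
    by (rule nn_integral_cong_AE, rule eventually_mono[OF g_AE0[OF i p]]) simp
  then show ?thesis using p by simp
qed

lemma Ad_int:
  assumes i: "i \<in> {1..n}" and F[measurable]: "F \<in> borel_measurable borel"
  shows "ennreal (p i) * (\<integral>\<^sup>+y. F y \<partial>Ad i) = (\<integral>\<^sup>+x. ennreal (h i x) * F x \<partial>lborel)"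
proof (cases "0 < p i")
  case True
  have "ennreal (p i) * (\<integral>\<^sup>+y. F y \<partial>Ad i)
      = ennreal (p i) * (\<integral>\<^sup>+x. ennreal (h i x / p i) * F x \<partial>lborel)"
    using True i by (simp add: Ad_def nn_integral_density)
  also have "\<dots> = (\<integral>\<^sup>+x. ennreal (p i) * (ennreal (h i x / p i) * F x) \<partial>lborel)"
    using i by (subst nn_integral_cmult) auto
  also have "\<dots> = (\<integral>\<^sup>+x. ennreal (h i x) * F x \<partial>lborel)"
  proof (intro nn_integral_cong)
    fix x
    have "ennreal (p i) * ennreal (h i x / p i) = ennreal (h i x)"
      using True i h_nonneg by (subst ennreal_mult[symmetric]) auto
    then show "ennreal (p i) * (ennreal (h i x / p i) * F x) = ennreal (h i x) * F x"
      by (simp add: mult.assoc[symmetric])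
  qed
  finally show ?thesis .
next
  case False
  then have p: "p i = 0" using p_nonneg[OF i] by simp
  have "(\<integral>\<^sup>+x. ennreal (h i x) * F x \<partial>lborel) = (\<integral>\<^sup>+x. 0 \<partial>(lborel::real measure))"
    by (rule nn_integral_cong_AE, rule eventually_mono[OF h_AE0[OF i p]]) simp
  then show ?thesis using p by simp
qed

lemma Ad_mean:
  assumes i: "i \<in> {1..n}"
  shows "integrable (Ad i) (\<lambda>x. x) \<and> (\<integral>x. x \<partial>Ad i) = 0"
proof (cases "0 < p i")
  case True
  have m: "(\<lambda>x. h i x / p i) \<in> borel_measurable lborel" using i by simp
  have mx: "(\<lambda>x::real. x) \<in> borel_measurable lborel" by simp
  have nn: "AE x in lborel. 0 \<le> h i x / p i" using True by (simp add: h_nonneg)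
  have e: "(\<lambda>x. (h i x / p i) *\<^sub>R x) = (\<lambda>x. h i x * x / p i)" by auto
  have 1: "integrable lborel (\<lambda>x. (h i x / p i) *\<^sub>R x)"
    unfolding e using xh_integrable[OF i] by (rule integrable_divide_zero)
  have 2: "(\<integral>x. (h i x / p i) *\<^sub>R x \<partial>lborel) = 0"
    unfolding e using xh_int[OF i] by (simp add: integral_divide_zero)
  have A: "Ad i = density lborel (\<lambda>x. ennreal (h i x / p i))"
    using True i by (simp add: Ad_def)
  show ?thesis unfolding A integrable_density[OF mx m nn] integral_density[OF mx m nn]
    using 1 2 by blast
next
  case False
  have A: "Ad i = return borel 0" using False by (simp add: Ad_def)
  show ?thesis unfolding A by (intro conjI integrable_return0, rule integral_return) auto
qed

lemma Yd_sym:
  assumes i: "i \<in> {1..n}" and F[measurable]: "F \<in> borel_measurable borel"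
  shows "(\<integral>\<^sup>+y. F (- y) \<partial>Yd i) = (\<integral>\<^sup>+y. F y \<partial>Yd i)"
proof (cases "p i < 1")
  case True
  let ?q = "\<lambda>x. ennreal (g i x / (1 - p i))"
  have "(\<integral>\<^sup>+y. F (- y) \<partial>Yd i) = (\<integral>\<^sup>+x. ?q x * F (- x) \<partial>lborel)"
    using True i by (simp add: Yd_def nn_integral_density)
  also have "\<dots> = ennreal \<bar>-1\<bar> * (\<integral>\<^sup>+x. ?q (0 + -1 * x) * F (- (0 + -1 * x)) \<partial>lborel)"
    using i by (intro nn_integral_real_affine) auto
  also have "\<dots> = (\<integral>\<^sup>+x. ?q x * F x \<partial>lborel)" by (simp add: g_sym)
  also have "\<dots> = (\<integral>\<^sup>+y. F y \<partial>Yd i)"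
    using True i by (simp add: Yd_def nn_integral_density)
  finally show ?thesis .
next
  case False
  then show ?thesis by (simp add: Yd_def nn_integral_return)
qed

lemma sf_Ad: "sigma_finite_measure (Ad i)" by (rule prob_space_imp_sigma_finite[OF prob_Ad])
lemma sf_Om1: "sigma_finite_measure (Om1 i)" by (rule prob_space_imp_sigma_finite[OF prob_Om1])
lemma sf_Om2: "sigma_finite_measure (Om2 i)" by (rule prob_space_imp_sigma_finite[OF prob_Om2])
lemma sf_bern: "sigma_finite_measure (measure_pmf q)"
  by (rule prob_space_imp_sigma_finite[OF prob_space_measure_pmf])

lemma Om_expand:
  assumes i: "i \<in> {1..n}"
    and G1[measurable]: "G1 \<in> borel_measurable (borel \<Otimes>\<^sub>M borel)"
    and G0[measurable]: "G0 \<in> borel_measurable borel"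
  shows "(\<integral>\<^sup>+w. (if snd (snd (snd w)) then G1 (fst (snd w), fst (snd (snd w))) else G0 (fst w)) \<partial>Om i)
       = ennreal (p i) * (\<integral>\<^sup>+a. \<integral>\<^sup>+b. G1 (a, b) \<partial>Ad i \<partial>Ad i) + ennreal (1 - p i) * (\<integral>\<^sup>+y. G0 y \<partial>Yd i)"
proof -
  interpret Ad: prob_space "Ad i" by (rule prob_Ad)
  have p0: "0 \<le> p i" "p i \<le> 1" using p_nonneg[OF i] p_le1[OF i] by auto
  let ?H = "\<lambda>w. (if snd (snd (snd w)) then G1 (fst (snd w), fst (snd (snd w))) else G0 (fst w))"
  have "(\<integral>\<^sup>+w. ?H w \<partial>Om i) = (\<integral>\<^sup>+y. \<integral>\<^sup>+r. ?H (y, r) \<partial>Om1 i \<partial>Yd i)"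
    unfolding Om_def by (rule sigma_finite_measure.nn_integral_fst[OF sf_Om1, symmetric]) simp
  also have "\<dots> = (\<integral>\<^sup>+y. \<integral>\<^sup>+a. \<integral>\<^sup>+r. ?H (y, a, r) \<partial>Om2 i \<partial>Ad i \<partial>Yd i)"
    unfolding Om1_def
    by (intro nn_integral_cong sigma_finite_measure.nn_integral_fst[OF sf_Om2, symmetric]) simp
  also have "\<dots> = (\<integral>\<^sup>+y. \<integral>\<^sup>+a. \<integral>\<^sup>+b. \<integral>\<^sup>+j. ?H (y, a, b, j) \<partial>measure_pmf (bernoulli_pmf (p i)) \<partial>Ad i \<partial>Ad i \<partial>Yd i)"
    unfolding Om2_def
    by (intro nn_integral_cong sigma_finite_measure.nn_integral_fst[OF sf_bern, symmetric]) simp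
  also have "\<dots> = (\<integral>\<^sup>+y. \<integral>\<^sup>+a. \<integral>\<^sup>+b. G1 (a, b) * ennreal (p i) + G0 y * ennreal (1 - p i) \<partial>Ad i \<partial>Ad i \<partial>Yd i)"
    using p0 by (intro nn_integral_cong) simp
  also have "\<dots> = (\<integral>\<^sup>+y. \<integral>\<^sup>+a. (\<integral>\<^sup>+b. G1 (a, b) \<partial>Ad i) * ennreal (p i) + G0 y * ennreal (1 - p i) \<partial>Ad i \<partial>Yd i)"
    by (intro nn_integral_cong) (simp add: nn_integral_add nn_integral_multc Ad.emeasure_space_1)
  also have "\<dots> = (\<integral>\<^sup>+y. (\<integral>\<^sup>+a. \<integral>\<^sup>+b. G1 (a, b) \<partial>Ad i \<partial>Ad i) * ennreal (p i) + G0 y * ennreal (1 - p i) \<partial>Yd i)"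
  proof -
    have m: "(\<lambda>a. \<integral>\<^sup>+b. G1 (a, b) \<partial>Ad i) \<in> borel_measurable borel"
      by (rule sigma_finite_measure.borel_measurable_nn_integral[OF sf_Ad, of "\<lambda>a b. G1 (a,b)"]) simp
    show ?thesis
    proof (intro nn_integral_cong)
      fix y
      have "(\<integral>\<^sup>+a. (\<integral>\<^sup>+b. G1 (a, b) \<partial>Ad i) * ennreal (p i) + G0 y * ennreal (1 - p i) \<partial>Ad i)
         = (\<integral>\<^sup>+a. (\<integral>\<^sup>+b. G1 (a, b) \<partial>Ad i) * ennreal (p i) \<partial>Ad i) + (\<integral>\<^sup>+a. G0 y * ennreal (1 - p i) \<partial>Ad i)"
        by (rule nn_integral_add) (use m in auto)
      also have "\<dots> = (\<integral>\<^sup>+a. \<integral>\<^sup>+b. G1 (a, b) \<partial>Ad i \<partial>Ad i) * ennreal (p i) + G0 y * ennreal (1 - p i)"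
        by (subst nn_integral_multc) (use m Ad.emeasure_space_1 in auto)
      finally show "(\<integral>\<^sup>+a. (\<integral>\<^sup>+b. G1 (a, b) \<partial>Ad i) * ennreal (p i) + G0 y * ennreal (1 - p i) \<partial>Ad i)
         = (\<integral>\<^sup>+a. \<integral>\<^sup>+b. G1 (a, b) \<partial>Ad i \<partial>Ad i) * ennreal (p i) + G0 y * ennreal (1 - p i)" .
    qed
  qed
  also have "\<dots> = (\<integral>\<^sup>+a. \<integral>\<^sup>+b. G1 (a, b) \<partial>Ad i \<partial>Ad i) * ennreal (p i) + (\<integral>\<^sup>+y. G0 y \<partial>Yd i) * ennreal (1 - p i)"
    using prob_space.emeasure_space_1[OF prob_Yd] by (simp add: nn_integral_add nn_integral_multc)
  finally show ?thesis by (simp add: mult.commute)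
qed

end


lemma jensen_abs:
  assumes Q: "prob_space Q" and Z: "integrable Q Z" and Z0: "(\<integral>x. Z x \<partial>Q) = 0"
  shows "ennreal \<bar>t\<bar> \<le> (\<integral>\<^sup>+x. ennreal \<bar>t + Z x\<bar> \<partial>Q)"
proof -
  interpret Q: prob_space Q by (rule Q)
  have int: "integrable Q (\<lambda>x. t + Z x)" using Z by simp
  have "(\<integral>x. t + Z x \<partial>Q) = t" using Z Z0 by (simp add: Q.prob_space)
  then have "ennreal \<bar>t\<bar> = ennreal (norm (\<integral>x. t + Z x \<partial>Q))" by simp
  also have "\<dots> \<le> (\<integral>\<^sup>+x. ennreal (norm (t + Z x)) \<partial>Q)" by (rule integral_norm_bound_ennreal[OF int])
  finally show ?thesis by simp
qed

context appt begin

lemma meas_AdAd[simp]: "measurable (Ad i \<Otimes>\<^sub>M Ad j) K = measurable (borel \<Otimes>\<^sub>M borel) K"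
  by (rule measurable_cong_sets[OF sets_pair_measure_cong[OF sets_Ad sets_Ad] refl])
lemma meas_QAd[simp]: "measurable (Q \<Otimes>\<^sub>M Ad i) K = measurable (Q \<Otimes>\<^sub>M borel) K"
  by (rule measurable_cong_sets[OF sets_pair_measure_cong[OF refl sets_Ad] refl])
lemma meas_AdQ[simp]: "measurable (Ad i \<Otimes>\<^sub>M Q) K = measurable (borel \<Otimes>\<^sub>M Q) K"
  by (rule measurable_cong_sets[OF sets_pair_measure_cong[OF sets_Ad refl] refl])

lemma int_Xf:
  assumes i: "i \<in> {1..n}" and F[measurable]: "F \<in> borel_measurable borel"
  shows "(\<integral>\<^sup>+w. F (Xf w) \<partial>Om i) = (\<integral>\<^sup>+x. ennreal (f i x) * F x \<partial>lborel)"
proof -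
  interpret Ad: prob_space "Ad i" by (rule prob_Ad)
  have "(\<integral>\<^sup>+w. F (Xf w) \<partial>Om i) = (\<integral>\<^sup>+w. (if snd (snd (snd w)) then (\<lambda>z. F (fst z)) (fst (snd w), fst (snd (snd w))) else F (fst w)) \<partial>Om i)"
    by (intro nn_integral_cong) (simp add: Xf_def)
  also have "\<dots> = ennreal (p i) * (\<integral>\<^sup>+a. \<integral>\<^sup>+b. (\<lambda>z. F (fst z)) (a, b) \<partial>Ad i \<partial>Ad i) + ennreal (1 - p i) * (\<integral>\<^sup>+y. F y \<partial>Yd i)"
    by (rule Om_expand[OF i]) simp_all
  also have "\<dots> = ennreal (p i) * (\<integral>\<^sup>+a. F a \<partial>Ad i) + ennreal (1 - p i) * (\<integral>\<^sup>+y. F y \<partial>Yd i)"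
    by (simp add: Ad.emeasure_space_1)
  also have "\<dots> = (\<integral>\<^sup>+x. ennreal (h i x) * F x \<partial>lborel) + (\<integral>\<^sup>+x. ennreal (g i x) * F x \<partial>lborel)"
    using Ad_int[OF i F] Yd_int[OF i F] by simp
  also have "\<dots> = (\<integral>\<^sup>+x. ennreal (h i x) * F x + ennreal (g i x) * F x \<partial>lborel)"
    by (rule nn_integral_add[symmetric]) (use i in simp_all)
  also have "\<dots> = (\<integral>\<^sup>+x. ennreal (f i x) * F x \<partial>lborel)"
  proof (intro nn_integral_cong)
    fix x
    have "ennreal (f i x) = ennreal (h i x + g i x)" by (simp add: fgh[of i x] add.commute)
    also have "\<dots> = ennreal (h i x) + ennreal (g i x)"
      by (rule ennreal_plus) (use h_nonneg[of i x] g_nonneg[OF i, of x] in auto)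
    finally have "ennreal (f i x) = ennreal (h i x) + ennreal (g i x)" .
    then show "ennreal (h i x) * F x + ennreal (g i x) * F x = ennreal (f i x) * F x"
      by (simp add: distrib_right)
  qed
  finally show ?thesis .
qed

lemma distr_Xf: "i \<in> {1..n} \<Longrightarrow> distr (Om i) borel Xf = distr M borel (X i)"
proof -
  assume i: "i \<in> {1..n}"
  have "distr (Om i) borel Xf = density lborel (\<lambda>x. ennreal (f i x))"
  proof (rule measure_eqI)
    fix S assume S: "S \<in> sets (distr (Om i) borel Xf)"
    then have S': "S \<in> sets borel" by simp
    have XS: "Xf -` S \<inter> space (Om i) \<in> sets (Om i)"
      by (rule measurable_sets[OF _ S']) simp
    have "emeasure (distr (Om i) borel Xf) S = emeasure (Om i) (Xf -` S \<inter> space (Om i))"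
      by (rule emeasure_distr) (simp_all add: S')
    also have "\<dots> = (\<integral>\<^sup>+w. indicator (Xf -` S \<inter> space (Om i)) w \<partial>Om i)"
      by (rule nn_integral_indicator[symmetric, OF XS])
    also have "\<dots> = (\<integral>\<^sup>+w. indicator S (Xf w) \<partial>Om i)"
      by (intro nn_integral_cong) (simp split: split_indicator)
    also have "\<dots> = (\<integral>\<^sup>+x. ennreal (f i x) * indicator S x \<partial>lborel)"
      using S' by (intro int_Xf[OF i]) simp
    also have "\<dots> = emeasure (density lborel (\<lambda>x. ennreal (f i x))) S"
      using S' i by (subst emeasure_density) auto
    finally show "emeasure (distr (Om i) borel Xf) S = emeasure (density lborel (\<lambda>x. ennreal (f i x))) S" .
  qed simp
  then show ?thesis using distrX_borel[OF i] by simp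
qed

lemma emeasure_distr_ind:
  assumes T: "T \<in> measurable K borel" and S: "S \<in> sets borel"
  shows "emeasure (distr K borel T) S = (\<integral>\<^sup>+w. indicator S (T w) \<partial>K)"
proof -
  have XS: "T -` S \<inter> space K \<in> sets K" by (rule measurable_sets[OF T S])
  have "emeasure (distr K borel T) S = emeasure K (T -` S \<inter> space K)"
    by (rule emeasure_distr[OF T S])
  also have "\<dots> = (\<integral>\<^sup>+w. indicator (T -` S \<inter> space K) w \<partial>K)"
    by (rule nn_integral_indicator[symmetric, OF XS])
  also have "\<dots> = (\<integral>\<^sup>+w. indicator S (T w) \<partial>K)"
    by (intro nn_integral_cong) (simp split: split_indicator)
  finally show ?thesis .
qed

lemma emeasure_Uf:
  assumes i: "i \<in> {1..n}" and S: "S \<in> sets borel"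
  shows "emeasure (distr (Om i) borel Uf) S = ennreal (p i) * emeasure (Ad i) S + ennreal (1 - p i) * indicator S 0"
proof -
  interpret Ad: prob_space "Ad i" by (rule prob_Ad)
  interpret Yd: prob_space "Yd i" by (rule prob_Yd)
  have "emeasure (distr (Om i) borel Uf) S = (\<integral>\<^sup>+w. indicator S (Uf w) \<partial>Om i)"
    by (rule emeasure_distr_ind[OF _ S]) simp
  also have "\<dots> = (\<integral>\<^sup>+w. (if snd (snd (snd w)) then (\<lambda>z. indicator S (snd z)) (fst (snd w), fst (snd (snd w))) else (\<lambda>y. indicator S (0::real)) (fst w)) \<partial>Om i)"
    by (intro nn_integral_cong) (simp add: Uf_def)
  also have "\<dots> = ennreal (p i) * (\<integral>\<^sup>+a. \<integral>\<^sup>+b. (\<lambda>z. indicator S (snd z)) (a, b) \<partial>Ad i \<partial>Ad i) + ennreal (1 - p i) * (\<integral>\<^sup>+y. (\<lambda>y. indicator S (0::real)) y \<partial>Yd i)"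
    by (rule Om_expand[OF i]) (use S in simp_all)
  also have "\<dots> = ennreal (p i) * emeasure (Ad i) S + ennreal (1 - p i) * indicator S 0"
    using S by (simp add: Ad.emeasure_space_1 Yd.emeasure_space_1 nn_integral_indicator sets_Ad)
  finally show ?thesis .
qed

lemma emeasure_AJ:
  assumes i: "i \<in> {1..n}" and S: "S \<in> sets borel"
  shows "emeasure (distr N borel (\<lambda>s. A i s * J i s)) S = ennreal (p i) * emeasure (Ad i) S + ennreal (1 - p i) * indicator S 0"
proof -
  have Am[measurable]: "A i \<in> borel_measurable N" and Jm[measurable]: "J i \<in> borel_measurable N"
    using AJ_rv[OF i] by auto
  define E where "E = {s \<in> space N. J i s = 1}"
  have E: "E \<in> sets N" unfolding E_def by measurable
  have PE: "emeasure N E = ennreal (p i)" using J_prob[OF i] N.emeasure_eq_measure[of E] by (simp add: E_def)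
  have PEc: "emeasure N (space N - E) = ennreal (1 - p i)"
    using N.prob_compl[OF E] J_prob[OF i] N.emeasure_eq_measure[of "space N - E"] by (simp add: E_def)
  have "emeasure (distr N borel (\<lambda>s. A i s * J i s)) S = (\<integral>\<^sup>+s. indicator S (A i s * J i s) \<partial>N)"
    by (rule emeasure_distr_ind[OF _ S]) simp
  also have "\<dots> = (\<integral>\<^sup>+s. indicator (S \<times> {1}) (A i s, J i s) + indicator S 0 * indicator (space N - E) s \<partial>N)"
    apply (rule nn_integral_cong_AE)
    using J_bern[OF i] AE_space[where M=N] by eventually_elim (auto simp: E_def split: split_indicator)
  also have "\<dots> = (\<integral>\<^sup>+s. indicator (S \<times> {1}) (A i s, J i s) \<partial>N) + indicator S 0 * emeasure N (space N - E)"
    using S E by (subst nn_integral_add) (auto simp: nn_integral_cmult nn_integral_indicator)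
  also have "(\<integral>\<^sup>+s. indicator (S \<times> {1}) (A i s, J i s) \<partial>N) = emeasure (distr N (borel \<Otimes>\<^sub>M borel) (\<lambda>s. (A i s, J i s))) (S \<times> {1})"
  proof -
    have T: "(\<lambda>s. (A i s, J i s)) \<in> measurable N (borel \<Otimes>\<^sub>M borel)" by simp
    have ST: "S \<times> {1::real} \<in> sets (borel \<Otimes>\<^sub>M borel)" by (intro pair_measureI S borel_closed) simp
    have XS: "(\<lambda>s. (A i s, J i s)) -` (S \<times> {1}) \<inter> space N \<in> sets N" by (rule measurable_sets[OF T ST])
    have "emeasure (distr N (borel \<Otimes>\<^sub>M borel) (\<lambda>s. (A i s, J i s))) (S \<times> {1}) = emeasure N ((\<lambda>s. (A i s, J i s)) -` (S \<times> {1}) \<inter> space N)"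
      by (rule emeasure_distr[OF T ST])
    also have "\<dots> = (\<integral>\<^sup>+s. indicator ((\<lambda>s. (A i s, J i s)) -` (S \<times> {1}) \<inter> space N) s \<partial>N)"
      by (rule nn_integral_indicator[symmetric, OF XS])
    also have "\<dots> = (\<integral>\<^sup>+s. indicator (S \<times> {1}) (A i s, J i s) \<partial>N)"
      by (intro nn_integral_cong) (simp split: split_indicator)
    finally show ?thesis by simp
  qed
  also have "\<dots> = emeasure (distr N borel (A i) \<Otimes>\<^sub>M distr N borel (J i)) (S \<times> {1})"
    using N.indep_var_distribution_eq[THEN iffD1, OF A_J_indep[OF i]] by simp
  also have "\<dots> = emeasure (distr N borel (A i)) S * emeasure (distr N borel (J i)) {1}"
  proof -
    interpret DJ: prob_space "distr N borel (J i)" by (rule N.prob_space_distr) simp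
    show ?thesis using S by (intro DJ.emeasure_pair_measure_Times) auto
  qed
  also have "emeasure (distr N borel (J i)) {1} = emeasure N E"
    by (subst emeasure_distr) (auto simp: E_def vimage_def Int_def conj_commute)
  also have "emeasure (distr N borel (A i)) S * emeasure N E = ennreal (p i) * emeasure (Ad i) S"
  proof (cases "0 < p i")
    case True
    have "distr N borel (A i) = distr N lborel (A i)" by (intro distr_cong) auto
    also have "\<dots> = density lborel (\<lambda>x. ennreal (h i x / p i))"
      using A_dens[OF i True] by (simp add: distributed_def)
    also have "\<dots> = Ad i" using True i by (simp add: Ad_def)
    finally show ?thesis using PE by (simp add: mult.commute)
  next
    case False
    then have "p i = 0" using p_nonneg[OF i] by simp
    then show ?thesis using PE by simp
  qed
  finally show ?thesis using PEc by (simp add: mult.commute)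
qed

lemma distr_Uf: "i \<in> {1..n} \<Longrightarrow> distr (Om i) borel Uf = distr N borel (\<lambda>s. A i s * J i s)"
proof -
  assume i: "i \<in> {1..n}"
  have Am[measurable]: "A i \<in> borel_measurable N" and Jm[measurable]: "J i \<in> borel_measurable N"
    using AJ_rv[OF i] by auto
  show ?thesis
    by (rule measure_eqI) (simp_all add: emeasure_Uf[OF i] emeasure_AJ[OF i])
qed

lemma Zf_sym:
  assumes i: "i \<in> {1..n}" and F[measurable]: "F \<in> borel_measurable borel"
  shows "(\<integral>\<^sup>+w. F (Zf w) \<partial>Om i) = (\<integral>\<^sup>+w. F (- Zf w) \<partial>Om i)"
proof -
  interpret P: pair_sigma_finite "Ad i" "Ad i" unfolding pair_sigma_finite_def using sf_Ad by auto
  have "(\<integral>\<^sup>+w. F (Zf w) \<partial>Om i) = (\<integral>\<^sup>+w. (if snd (snd (snd w)) then (\<lambda>z. F (fst z - snd z)) (fst (snd w), fst (snd (snd w))) else F (fst w)) \<partial>Om i)"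
    by (intro nn_integral_cong) (simp add: Zf_def)
  also have "\<dots> = ennreal (p i) * (\<integral>\<^sup>+a. \<integral>\<^sup>+b. (\<lambda>z. F (fst z - snd z)) (a, b) \<partial>Ad i \<partial>Ad i) + ennreal (1 - p i) * (\<integral>\<^sup>+y. F y \<partial>Yd i)"
    by (rule Om_expand[OF i]) simp_all
  also have "(\<integral>\<^sup>+a. \<integral>\<^sup>+b. (\<lambda>z. F (fst z - snd z)) (a, b) \<partial>Ad i \<partial>Ad i) = (\<integral>\<^sup>+a. \<integral>\<^sup>+b. (\<lambda>z. F (- (fst z - snd z))) (a, b) \<partial>Ad i \<partial>Ad i)"
  proof -
    have "(\<integral>\<^sup>+a. \<integral>\<^sup>+b. (\<lambda>z. F (- (fst z - snd z))) (a, b) \<partial>Ad i \<partial>Ad i) = (\<integral>\<^sup>+a. \<integral>\<^sup>+b. F (b - a) \<partial>Ad i \<partial>Ad i)"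
      by simp
    also have "\<dots> = (\<integral>\<^sup>+b. \<integral>\<^sup>+a. F (b - a) \<partial>Ad i \<partial>Ad i)"
      by (rule P.Fubini') simp
    finally show ?thesis by simp
  qed
  also have "(\<integral>\<^sup>+y. F y \<partial>Yd i) = (\<integral>\<^sup>+y. F (- y) \<partial>Yd i)" by (rule Yd_sym[OF i F, symmetric])
  also have "ennreal (p i) * (\<integral>\<^sup>+a. \<integral>\<^sup>+b. (\<lambda>z. F (- (fst z - snd z))) (a, b) \<partial>Ad i \<partial>Ad i) + ennreal (1 - p i) * (\<integral>\<^sup>+y. F (- y) \<partial>Yd i)
      = (\<integral>\<^sup>+w. (if snd (snd (snd w)) then (\<lambda>z. F (- (fst z - snd z))) (fst (snd w), fst (snd (snd w))) else F (- fst w)) \<partial>Om i)"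
    by (rule Om_expand[OF i, symmetric]) simp_all
  also have "\<dots> = (\<integral>\<^sup>+w. F (- Zf w) \<partial>Om i)"
    by (intro nn_integral_cong) (simp add: Zf_def)
  finally show ?thesis .
qed

lemma Xf_le_Zf:
  assumes i: "i \<in> {1..n}" and F[measurable]: "F \<in> borel_measurable borel"
    and le: "\<And>a. F a \<le> (\<integral>\<^sup>+b. F (a - b) \<partial>Ad i)"
  shows "(\<integral>\<^sup>+w. F (Xf w) \<partial>Om i) \<le> (\<integral>\<^sup>+w. F (Zf w) \<partial>Om i)"
proof -
  interpret Ad: prob_space "Ad i" by (rule prob_Ad)
  have "(\<integral>\<^sup>+w. F (Xf w) \<partial>Om i) = (\<integral>\<^sup>+w. (if snd (snd (snd w)) then (\<lambda>z. F (fst z)) (fst (snd w), fst (snd (snd w))) else F (fst w)) \<partial>Om i)"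
    by (intro nn_integral_cong) (simp add: Xf_def)
  also have "\<dots> = ennreal (p i) * (\<integral>\<^sup>+a. \<integral>\<^sup>+b. (\<lambda>z. F (fst z)) (a, b) \<partial>Ad i \<partial>Ad i) + ennreal (1 - p i) * (\<integral>\<^sup>+y. F y \<partial>Yd i)"
    by (rule Om_expand[OF i]) simp_all
  also have "\<dots> \<le> ennreal (p i) * (\<integral>\<^sup>+a. \<integral>\<^sup>+b. (\<lambda>z. F (fst z - snd z)) (a, b) \<partial>Ad i \<partial>Ad i) + ennreal (1 - p i) * (\<integral>\<^sup>+y. F y \<partial>Yd i)"
  proof -
    have "(\<integral>\<^sup>+a. \<integral>\<^sup>+b. (\<lambda>z. F (fst z)) (a, b) \<partial>Ad i \<partial>Ad i) \<le> (\<integral>\<^sup>+a. \<integral>\<^sup>+b. (\<lambda>z. F (fst z - snd z)) (a, b) \<partial>Ad i \<partial>Ad i)"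
    proof (rule nn_integral_mono)
      fix a
      show "(\<integral>\<^sup>+b. (\<lambda>z. F (fst z)) (a, b) \<partial>Ad i) \<le> (\<integral>\<^sup>+b. (\<lambda>z. F (fst z - snd z)) (a, b) \<partial>Ad i)"
        using le[of a] by (simp add: Ad.emeasure_space_1)
    qed
    then show ?thesis by (intro add_mono mult_left_mono) auto
  qed
  also have "\<dots> = (\<integral>\<^sup>+w. (if snd (snd (snd w)) then (\<lambda>z. F (fst z - snd z)) (fst (snd w), fst (snd (snd w))) else F (fst w)) \<partial>Om i)"
    by (rule Om_expand[OF i, symmetric]) simp_all
  also have "\<dots> = (\<integral>\<^sup>+w. F (Zf w) \<partial>Om i)"
    by (intro nn_integral_cong) (simp add: Zf_def)
  finally show ?thesis .
qed

lemma Phi_jensen: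
  assumes i: "i \<in> {1..n}" and Q: "sigma_finite_measure Q" and R[measurable]: "R \<in> borel_measurable Q"
  shows "(\<integral>\<^sup>+x. ennreal \<bar>a + R x\<bar> \<partial>Q) \<le> (\<integral>\<^sup>+b. (\<integral>\<^sup>+x. ennreal \<bar>(a - b) + R x\<bar> \<partial>Q) \<partial>Ad i)"
proof -
  interpret P: pair_sigma_finite Q "Ad i" unfolding pair_sigma_finite_def using sf_Ad Q by auto
  have mean: "integrable (Ad i) (\<lambda>b. - b)" "(\<integral>b. - b \<partial>Ad i) = 0" using Ad_mean[OF i] by auto
  have "(\<integral>\<^sup>+x. ennreal \<bar>a + R x\<bar> \<partial>Q) \<le> (\<integral>\<^sup>+x. \<integral>\<^sup>+b. ennreal \<bar>(a + R x) + - b\<bar> \<partial>Ad i \<partial>Q)"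
    by (intro nn_integral_mono jensen_abs[OF prob_Ad mean])
  also have "\<dots> = (\<integral>\<^sup>+b. \<integral>\<^sup>+x. ennreal \<bar>(a + R x) + - b\<bar> \<partial>Q \<partial>Ad i)"
    by (rule P.Fubini'[symmetric]) simp
  also have "\<dots> = (\<integral>\<^sup>+b. (\<integral>\<^sup>+x. ennreal \<bar>(a - b) + R x\<bar> \<partial>Q) \<partial>Ad i)"
    by (intro nn_integral_cong) (simp add: algebra_simps)
  finally show ?thesis .
qed

end


fun lindS :: "(nat \<Rightarrow> real) \<Rightarrow> real \<Rightarrow> nat \<Rightarrow> nat \<Rightarrow> real" where
  "lindS x w a 0 = w"
| "lindS x w a (Suc m) = lindS x (max 0 (w + x a)) (Suc a) m"

lemma lindS_cong: "(\<And>i. a \<le> i \<Longrightarrow> i < a + m \<Longrightarrow> x i = x' i) \<Longrightarrow> lindS x w a m = lindS x' w a m"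
proof (induction m arbitrary: w a)
  case 0 then show ?case by simp
next
  case (Suc m)
  have "x a = x' a" using Suc.prems by simp
  moreover have "lindS x w' (Suc a) m = lindS x' w' (Suc a) m" for w'
    by (rule Suc.IH) (use Suc.prems in auto)
  ultimately show ?case by simp
qed

lemma lindS_snoc: "lindS x w a (Suc m) = max 0 (lindS x w a m + x (a + m))"
  by (induction m arbitrary: w a) simp_all

lemma lindS_nonneg: "0 \<le> w \<Longrightarrow> 0 \<le> lindS x w a m"
  by (induction m arbitrary: w a) simp_all

lemma lindS_meas:
  assumes "\<And>i. a \<le> i \<Longrightarrow> i < a + m \<Longrightarrow> x i \<in> borel_measurable K"
    and "W \<in> borel_measurable K"
  shows "(\<lambda>k. lindS (\<lambda>i. x i k) (W k) a m) \<in> borel_measurable K"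
  using assms
proof (induction m arbitrary: W a)
  case 0 then show ?case by simp
next
  case (Suc m)
  have [measurable]: "x a \<in> borel_measurable K" "W \<in> borel_measurable K" using Suc.prems by auto
  have "(\<lambda>k. lindS (\<lambda>i. x i k) (max 0 (W k + x a k)) (Suc a) m) \<in> borel_measurable K"
    by (rule Suc.IH) (use Suc.prems in auto)
  then show ?case by simp
qed

context appt begin

lemma pps: "product_prob_space Om" by (rule product_prob_spaceI[OF prob_Om])
lemma psf: "product_sigma_finite Om"
  using pps unfolding product_prob_space_def by auto

lemma sets_PI: "sets (PiM I Om) = sets (PiM I (\<lambda>_. OmS))"
  by (rule sets_PiM_cong) (simp_all add: sets_Om)
lemma meas_PI[simp]: "measurable (PiM I Om) K = measurable (PiM I (\<lambda>_. OmS)) K"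
  by (rule measurable_cong_sets[OF sets_PI refl])
lemma meas_PIOm[simp]: "measurable (PiM I Om \<Otimes>\<^sub>M Om a) K = measurable (PiM I (\<lambda>_. OmS) \<Otimes>\<^sub>M OmS) K"
  by (rule measurable_cong_sets[OF sets_pair_measure_cong[OF sets_PI sets_Om] refl])
lemma prob_PI: "prob_space (PiM I Om)"
  by (rule prob_space_PiM[OF prob_Om])
lemma sf_PI: "sigma_finite_measure (PiM I Om)"
  by (rule prob_space_imp_sigma_finite[OF prob_PI])
lemma psf_PIOm: "pair_sigma_finite (PiM I Om) (Om a)"
  unfolding pair_sigma_finite_def using sf_PI prob_space_imp_sigma_finite[OF prob_Om] by auto

lemma sumZ_sym:
  assumes "finite I" "I \<subseteq> {1..n}"
  shows "F \<in> borel_measurable borel \<Longrightarrow>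
    (\<integral>\<^sup>+\<omega>. F (\<Sum>i\<in>I. Zf (\<omega> i)) \<partial>PiM I Om) = (\<integral>\<^sup>+\<omega>. F (- (\<Sum>i\<in>I. Zf (\<omega> i))) \<partial>PiM I Om)"
  using assms
proof (induction I arbitrary: F rule: finite_induct)
  case empty then show ?case by simp
next
  case (insert a I)
  note F[measurable] = insert.prems(1)
  have a: "a \<in> {1..n}" and I: "I \<subseteq> {1..n}" using insert.prems by auto
  interpret P: pair_sigma_finite "PiM I Om" "Om a" by (rule psf_PIOm)
  let ?S = "\<lambda>x. \<Sum>i\<in>I. Zf (x i)"
  have upd: "(\<Sum>i\<in>insert a I. Zf ((x(a := y)) i)) = Zf y + ?S x" for x y
  proof -
    have "(\<Sum>i\<in>I. Zf ((x(a := y)) i)) = ?S x"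
      by (rule sum.cong) (use insert.hyps in auto)
    then show ?thesis using insert.hyps by simp
  qed
  have "(\<integral>\<^sup>+\<omega>. F (\<Sum>i\<in>insert a I. Zf (\<omega> i)) \<partial>PiM (insert a I) Om)
      = (\<integral>\<^sup>+y. \<integral>\<^sup>+x. F (\<Sum>i\<in>insert a I. Zf ((x(a := y)) i)) \<partial>PiM I Om \<partial>Om a)"
    by (rule product_sigma_finite.product_nn_integral_insert_rev[OF psf insert.hyps(1,2)]) simp
  also have "\<dots> = (\<integral>\<^sup>+y. \<integral>\<^sup>+x. F (Zf y + ?S x) \<partial>PiM I Om \<partial>Om a)"
    by (simp only: upd)
  also have "\<dots> = (\<integral>\<^sup>+y. \<integral>\<^sup>+x. F (Zf y + - ?S x) \<partial>PiM I Om \<partial>Om a)"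
  proof (rule nn_integral_cong)
    fix y
    show "(\<integral>\<^sup>+x. F (Zf y + ?S x) \<partial>PiM I Om) = (\<integral>\<^sup>+x. F (Zf y + - ?S x) \<partial>PiM I Om)"
      using insert.IH[of "\<lambda>t. F (Zf y + t)"] I insert.hyps by simp
  qed
  also have "\<dots> = (\<integral>\<^sup>+x. \<integral>\<^sup>+y. F (Zf y + - ?S x) \<partial>Om a \<partial>PiM I Om)"
    by (rule P.Fubini') simp
  also have "\<dots> = (\<integral>\<^sup>+x. \<integral>\<^sup>+y. F (- Zf y + - ?S x) \<partial>Om a \<partial>PiM I Om)"
  proof (rule nn_integral_cong)
    fix x
    show "(\<integral>\<^sup>+y. F (Zf y + - ?S x) \<partial>Om a) = (\<integral>\<^sup>+y. F (- Zf y + - ?S x) \<partial>Om a)"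
      using Zf_sym[OF a, of "\<lambda>t. F (t + - ?S x)"] by simp
  qed
  also have "\<dots> = (\<integral>\<^sup>+y. \<integral>\<^sup>+x. F (- Zf y + - ?S x) \<partial>PiM I Om \<partial>Om a)"
    by (rule P.Fubini'[symmetric]) simp
  also have "\<dots> = (\<integral>\<^sup>+y. \<integral>\<^sup>+x. F (- (\<Sum>i\<in>insert a I. Zf ((x(a := y)) i))) \<partial>PiM I Om \<partial>Om a)"
    by (simp only: upd minus_add_distrib)
  also have "\<dots> = (\<integral>\<^sup>+\<omega>. F (- (\<Sum>i\<in>insert a I. Zf (\<omega> i))) \<partial>PiM (insert a I) Om)"
    by (rule product_sigma_finite.product_nn_integral_insert_rev[OF psf insert.hyps(1,2), symmetric]) simp
  finally show ?case .
qed

lemma max0_bound: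
  assumes "finite I" "I \<subseteq> {1..n}"
  shows "(\<integral>\<^sup>+\<omega>. ennreal \<bar>max 0 c + (\<Sum>i\<in>I. Zf (\<omega> i))\<bar> \<partial>PiM I Om)
       \<le> (\<integral>\<^sup>+\<omega>. ennreal \<bar>c + (\<Sum>i\<in>I. Zf (\<omega> i))\<bar> \<partial>PiM I Om)"
proof (cases "0 \<le> c")
  case True then show ?thesis by simp
next
  case False
  let ?S = "\<lambda>\<omega>. \<Sum>i\<in>I. Zf (\<omega> i)"
  have sym: "(\<integral>\<^sup>+\<omega>. ennreal \<bar>c + ?S \<omega>\<bar> \<partial>PiM I Om) = (\<integral>\<^sup>+\<omega>. ennreal \<bar>c + - ?S \<omega>\<bar> \<partial>PiM I Om)"
    by (rule sumZ_sym[OF assms]) simp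
  have "ennreal 2 * (\<integral>\<^sup>+\<omega>. ennreal \<bar>?S \<omega>\<bar> \<partial>PiM I Om) = (\<integral>\<^sup>+\<omega>. ennreal (2 * \<bar>?S \<omega>\<bar>) \<partial>PiM I Om)"
    by (subst nn_integral_cmult[symmetric]) (simp_all add: ennreal_mult)
  also have "\<dots> \<le> (\<integral>\<^sup>+\<omega>. ennreal \<bar>c + ?S \<omega>\<bar> + ennreal \<bar>c + - ?S \<omega>\<bar> \<partial>PiM I Om)"
  proof (intro nn_integral_mono)
    fix \<omega>
    have "2 * \<bar>?S \<omega>\<bar> \<le> \<bar>c + ?S \<omega>\<bar> + \<bar>c + - ?S \<omega>\<bar>" by linarith
    then show "ennreal (2 * \<bar>?S \<omega>\<bar>) \<le> ennreal \<bar>c + ?S \<omega>\<bar> + ennreal \<bar>c + - ?S \<omega>\<bar>"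
      by (simp add: ennreal_plus[symmetric] del: ennreal_plus)
  qed
  also have "\<dots> = (\<integral>\<^sup>+\<omega>. ennreal \<bar>c + ?S \<omega>\<bar> \<partial>PiM I Om) + (\<integral>\<^sup>+\<omega>. ennreal \<bar>c + - ?S \<omega>\<bar> \<partial>PiM I Om)"
    by (rule nn_integral_add) simp_all
  also have "\<dots> = ennreal 2 * (\<integral>\<^sup>+\<omega>. ennreal \<bar>c + ?S \<omega>\<bar> \<partial>PiM I Om)"
    unfolding sym[symmetric] by (simp add: mult_2)
  finally have "ennreal 2 * (\<integral>\<^sup>+\<omega>. ennreal \<bar>?S \<omega>\<bar> \<partial>PiM I Om) \<le> ennreal 2 * (\<integral>\<^sup>+\<omega>. ennreal \<bar>c + ?S \<omega>\<bar> \<partial>PiM I Om)" .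
  then have "(\<integral>\<^sup>+\<omega>. ennreal \<bar>?S \<omega>\<bar> \<partial>PiM I Om) \<le> (\<integral>\<^sup>+\<omega>. ennreal \<bar>c + ?S \<omega>\<bar> \<partial>PiM I Om)"
    by (subst (asm) ennreal_mult_le_mult_iff) auto
  then show ?thesis using False by simp
qed

end


context appt begin

lemma meas_bPI[simp]: "measurable (borel \<Otimes>\<^sub>M PiM I Om) K = measurable (borel \<Otimes>\<^sub>M PiM I (\<lambda>_. OmS)) K"
  by (rule measurable_cong_sets[OF sets_pair_measure_cong[OF refl sets_PI] refl])

lemma lind_bound:
  "{a..<a+m} \<subseteq> {1..n} \<Longrightarrow> 0 \<le> w \<Longrightarrow>
   (\<integral>\<^sup>+\<omega>. ennreal (lindS (\<lambda>i. Xf (\<omega> i)) w a m) \<partial>PiM {a..<a+m} Om)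
   \<le> (\<integral>\<^sup>+\<omega>. ennreal \<bar>w + (\<Sum>i\<in>{a..<a+m}. Zf (\<omega> i))\<bar> \<partial>PiM {a..<a+m} Om)"
proof (induction m arbitrary: a w)
  case 0 then show ?case by simp
next
  case (Suc m)
  define J where "J = {Suc a..<Suc a + m}"
  have ins: "{a..<a + Suc m} = insert a J" and aJ: "a \<notin> J" and fJ: "finite J"
    unfolding J_def by auto
  have a: "a \<in> {1..n}" using subsetD[OF Suc.prems(1), of a] by simp
  have Jn: "J \<subseteq> {1..n}" using Suc.prems(1) unfolding J_def by auto
  interpret P: pair_sigma_finite "PiM J Om" "Om a" by (rule psf_PIOm)
  let ?S = "\<lambda>x. \<Sum>i\<in>J. Zf (x i)"
  have mS[measurable]: "?S \<in> borel_measurable (PiM J (\<lambda>_. OmS))" by simp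
  have lupd: "lindS (\<lambda>i. Xf ((x(a := y)) i)) w a (Suc m) = lindS (\<lambda>i. Xf (x i)) (max 0 (w + Xf y)) (Suc a) m" for x y
    by simp (rule lindS_cong, simp)
  have supd: "(\<Sum>i\<in>insert a J. Zf ((x(a := y)) i)) = Zf y + ?S x" for x y
  proof -
    have "(\<Sum>i\<in>J. Zf ((x(a := y)) i)) = ?S x" by (rule sum.cong) (use aJ in auto)
    then show ?thesis using aJ fJ by simp
  qed
  have mL: "(\<lambda>\<omega>. ennreal (lindS (\<lambda>i. Xf (\<omega> i)) w a (Suc m))) \<in> borel_measurable (PiM (insert a J) (\<lambda>_. OmS))"
  proof -
    have "(\<lambda>\<omega>. lindS (\<lambda>i. Xf (\<omega> i)) ((\<lambda>_. w) \<omega>) a (Suc m)) \<in> borel_measurable (PiM (insert a J) (\<lambda>_. OmS))"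
    proof (rule lindS_meas)
      fix i assume "a \<le> i" "i < a + Suc m"
      then have "i \<in> insert a J" by (auto simp: J_def)
      then show "(\<lambda>k. Xf (k i)) \<in> borel_measurable (PiM (insert a J) (\<lambda>_. OmS))"
        using measurable_compose[OF measurable_component_singleton[of i "insert a J" "\<lambda>_. OmS"] Xf_meas] by simp
    qed simp
    then show ?thesis by (rule measurable_compose[OF _ measurable_ennreal])
  qed
  have "(\<integral>\<^sup>+\<omega>. ennreal (lindS (\<lambda>i. Xf (\<omega> i)) w a (Suc m)) \<partial>PiM {a..<a + Suc m} Om)
      = (\<integral>\<^sup>+y. \<integral>\<^sup>+x. ennreal (lindS (\<lambda>i. Xf ((x(a := y)) i)) w a (Suc m)) \<partial>PiM J Om \<partial>Om a)"
    unfolding ins by (rule product_sigma_finite.product_nn_integral_insert_rev[OF psf fJ aJ]) (subst meas_PI, rule mL)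
  also have "\<dots> = (\<integral>\<^sup>+y. \<integral>\<^sup>+x. ennreal (lindS (\<lambda>i. Xf (x i)) (max 0 (w + Xf y)) (Suc a) m) \<partial>PiM J Om \<partial>Om a)"
    by (simp only: lupd)
  also have "\<dots> \<le> (\<integral>\<^sup>+y. \<integral>\<^sup>+x. ennreal \<bar>max 0 (w + Xf y) + ?S x\<bar> \<partial>PiM J Om \<partial>Om a)"
  proof (rule nn_integral_mono)
    fix y
    show "(\<integral>\<^sup>+x. ennreal (lindS (\<lambda>i. Xf (x i)) (max 0 (w + Xf y)) (Suc a) m) \<partial>PiM J Om)
        \<le> (\<integral>\<^sup>+x. ennreal \<bar>max 0 (w + Xf y) + ?S x\<bar> \<partial>PiM J Om)"
      using Suc.IH[of "Suc a" "max 0 (w + Xf y)"] Jn unfolding J_def by simp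
  qed
  also have "\<dots> \<le> (\<integral>\<^sup>+y. \<integral>\<^sup>+x. ennreal \<bar>Xf y + (w + ?S x)\<bar> \<partial>PiM J Om \<partial>Om a)"
  proof (rule nn_integral_mono)
    fix y
    show "(\<integral>\<^sup>+x. ennreal \<bar>max 0 (w + Xf y) + ?S x\<bar> \<partial>PiM J Om) \<le> (\<integral>\<^sup>+x. ennreal \<bar>Xf y + (w + ?S x)\<bar> \<partial>PiM J Om)"
      using max0_bound[OF fJ Jn, of "w + Xf y"] by (simp add: add.assoc add.commute add.left_commute)
  qed
  also have "\<dots> \<le> (\<integral>\<^sup>+y. \<integral>\<^sup>+x. ennreal \<bar>Zf y + (w + ?S x)\<bar> \<partial>PiM J Om \<partial>Om a)"
  proof (rule Xf_le_Zf[OF a, where F="\<lambda>t. \<integral>\<^sup>+x. ennreal \<bar>t + (w + ?S x)\<bar> \<partial>PiM J Om"])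
    show "(\<lambda>t. \<integral>\<^sup>+x. ennreal \<bar>t + (w + ?S x)\<bar> \<partial>PiM J Om) \<in> borel_measurable borel"
      by (rule sigma_finite_measure.borel_measurable_nn_integral[OF sf_PI]) simp
    fix t
    show "(\<integral>\<^sup>+x. ennreal \<bar>t + (w + ?S x)\<bar> \<partial>PiM J Om) \<le> (\<integral>\<^sup>+b. (\<integral>\<^sup>+x. ennreal \<bar>(t - b) + (w + ?S x)\<bar> \<partial>PiM J Om) \<partial>Ad a)"
      by (rule Phi_jensen[OF a sf_PI]) simp
  qed
  also have "\<dots> = (\<integral>\<^sup>+y. \<integral>\<^sup>+x. ennreal \<bar>w + (\<Sum>i\<in>insert a J. Zf ((x(a := y)) i))\<bar> \<partial>PiM J Om \<partial>Om a)"
    by (simp only: supd) (simp add: algebra_simps)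
  also have "\<dots> = (\<integral>\<^sup>+\<omega>. ennreal \<bar>w + (\<Sum>i\<in>{a..<a + Suc m}. Zf (\<omega> i))\<bar> \<partial>PiM {a..<a + Suc m} Om)"
    unfolding ins by (rule product_sigma_finite.product_nn_integral_insert_rev[OF psf fJ aJ, symmetric]) simp
  finally show ?case .
qed

lemma tri_bound:
  assumes "finite I"
  shows "(\<integral>\<^sup>+\<omega>. ennreal \<bar>\<Sum>i\<in>I. Zf (\<omega> i)\<bar> \<partial>PiM I Om)
    \<le> (\<integral>\<^sup>+\<omega>. ennreal \<bar>\<Sum>i\<in>I. Xf (\<omega> i)\<bar> \<partial>PiM I Om) + (\<integral>\<^sup>+\<omega>. ennreal \<bar>\<Sum>i\<in>I. Uf (\<omega> i)\<bar> \<partial>PiM I Om)"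
proof -
  have "(\<integral>\<^sup>+\<omega>. ennreal \<bar>\<Sum>i\<in>I. Zf (\<omega> i)\<bar> \<partial>PiM I Om)
      \<le> (\<integral>\<^sup>+\<omega>. ennreal \<bar>\<Sum>i\<in>I. Xf (\<omega> i)\<bar> + ennreal \<bar>\<Sum>i\<in>I. Uf (\<omega> i)\<bar> \<partial>PiM I Om)"
  proof (rule nn_integral_mono)
    fix \<omega>
    have "(\<Sum>i\<in>I. Zf (\<omega> i)) = (\<Sum>i\<in>I. Xf (\<omega> i)) - (\<Sum>i\<in>I. Uf (\<omega> i))"
      by (simp add: Zf_eq sum_subtractf)
    then have "\<bar>\<Sum>i\<in>I. Zf (\<omega> i)\<bar> \<le> \<bar>\<Sum>i\<in>I. Xf (\<omega> i)\<bar> + \<bar>\<Sum>i\<in>I. Uf (\<omega> i)\<bar>" by linarith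
    then show "ennreal \<bar>\<Sum>i\<in>I. Zf (\<omega> i)\<bar> \<le> ennreal \<bar>\<Sum>i\<in>I. Xf (\<omega> i)\<bar> + ennreal \<bar>\<Sum>i\<in>I. Uf (\<omega> i)\<bar>"
      by (simp add: ennreal_plus[symmetric] del: ennreal_plus)
  qed
  also have "\<dots> = (\<integral>\<^sup>+\<omega>. ennreal \<bar>\<Sum>i\<in>I. Xf (\<omega> i)\<bar> \<partial>PiM I Om) + (\<integral>\<^sup>+\<omega>. ennreal \<bar>\<Sum>i\<in>I. Uf (\<omega> i)\<bar> \<partial>PiM I Om)"
    by (rule nn_integral_add) simp_all
  finally show ?thesis .
qed

lemma transfer_gen:
  assumes K: "prob_space K" and fin: "finite I" and ne: "I \<noteq> {}"
    and ind: "prob_space.indep_vars K (\<lambda>_. borel) Y I"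
    and Ym: "\<And>i. i \<in> I \<Longrightarrow> Y i \<in> borel_measurable K"
    and D: "\<And>i. i \<in> I \<Longrightarrow> distr (Om i) borel T = distr K borel (Y i)"
    and T[measurable]: "T \<in> borel_measurable OmS"
    and F[measurable]: "F \<in> borel_measurable (PiM I (\<lambda>_. borel))"
  shows "(\<integral>\<^sup>+s. F (\<lambda>i\<in>I. Y i s) \<partial>K) = (\<integral>\<^sup>+\<omega>. F (\<lambda>i\<in>I. T (\<omega> i)) \<partial>PiM I Om)"
proof -
  interpret K: prob_space K by (rule K)
  have mY: "(\<lambda>s. \<lambda>i\<in>I. Y i s) \<in> measurable K (PiM I (\<lambda>_. borel))"
    by (rule measurable_restrict) (rule Ym)
  have D1: "distr K (PiM I (\<lambda>_. borel)) (\<lambda>s. \<lambda>i\<in>I. Y i s) = PiM I (\<lambda>i. distr K borel (Y i))"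
    by (rule K.indep_vars_iff_distr_eq_PiM'[THEN iffD1, OF ne _ ind]) (rule Ym)
  define M' where "M' i = distr (Om i) borel T" for i
  have sM': "sets (M' i) = sets borel" for i by (simp add: M'_def)
  have D2: "distr (PiM I Om) (PiM I M') (compose I T) = PiM I (\<lambda>i. distr (Om i) (M' i) T)"
  proof (rule distr_PiM_finite_prob_space'[OF fin])
    fix i assume "i \<in> I"
    show "prob_space (Om i)" by (rule prob_Om)
    show "prob_space (M' i)" unfolding M'_def by (rule prob_space.prob_space_distr[OF prob_Om]) simp
    show "T \<in> Om i \<rightarrow>\<^sub>M M' i" unfolding measurable_cong_sets[OF refl sM'] by simp
  qed
  have e1: "distr (PiM I Om) (PiM I M') (compose I T) = distr (PiM I Om) (PiM I (\<lambda>_. borel)) (compose I T)"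
    by (rule distr_cong) (auto intro!: sets_PiM_cong simp: sM')
  have e2: "PiM I (\<lambda>i. distr (Om i) (M' i) T) = PiM I (\<lambda>i. distr K borel (Y i))"
  proof (rule PiM_cong)
    fix i assume i: "i \<in> I"
    have "distr (Om i) (M' i) T = distr (Om i) borel T" by (rule distr_cong) (auto simp: sM')
    then show "distr (Om i) (M' i) T = distr K borel (Y i)" using D[OF i] by simp
  qed simp
  have mT: "compose I T \<in> measurable (PiM I Om) (PiM I (\<lambda>_. borel))"
    unfolding compose_def by simp
  have "(\<integral>\<^sup>+s. F (\<lambda>i\<in>I. Y i s) \<partial>K) = (\<integral>\<^sup>+v. F v \<partial>distr K (PiM I (\<lambda>_. borel)) (\<lambda>s. \<lambda>i\<in>I. Y i s))"
    by (rule nn_integral_distr[symmetric, OF mY]) simp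
  also have "\<dots> = (\<integral>\<^sup>+v. F v \<partial>distr (PiM I Om) (PiM I (\<lambda>_. borel)) (compose I T))"
    unfolding D1 e1[symmetric] D2 e2 ..
  also have "\<dots> = (\<integral>\<^sup>+\<omega>. F (compose I T \<omega>) \<partial>PiM I Om)"
    by (rule nn_integral_distr[OF mT]) simp
  also have "\<dots> = (\<integral>\<^sup>+\<omega>. F (\<lambda>i\<in>I. T (\<omega> i)) \<partial>PiM I Om)"
    by (simp add: compose_def)
  finally show ?thesis .
qed

lemma indep_X: "M.indep_vars (\<lambda>_. borel) X {1..n}"
proof -
  have "M.indep_vars (\<lambda>_. borel) (\<lambda>i x. (\<lambda>b. b - \<mu> i) (B i x)) {1..n}"
    by (rule M.indep_vars_compose2[OF B_indep]) simp
  moreover have "(\<lambda>i x. (\<lambda>b. b - \<mu> i) (B i x)) = X" by (auto simp: X_def fun_eq_iff)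
  ultimately show ?thesis by simp
qed

lemma indep_U: "N.indep_vars (\<lambda>_. borel) (\<lambda>i s. A i s * J i s) {1..n}"
proof -
  have m: "(\<lambda>z::real \<times> real. fst z * snd z) \<in> borel_measurable borel"
    unfolding borel_prod[symmetric] by simp
  have "N.indep_vars (\<lambda>_. borel) (\<lambda>i s. (\<lambda>z. fst z * snd z) (A i s, J i s)) {1..n}"
    by (rule N.indep_vars_compose2[OF AJ_indep]) (rule m)
  then show ?thesis by simp
qed

lemma transfer_M:
  assumes I: "I \<subseteq> {1..n}" "I \<noteq> {}" and F[measurable]: "F \<in> borel_measurable (PiM I (\<lambda>_. borel))"
  shows "(\<integral>\<^sup>+s. F (\<lambda>i\<in>I. X i s) \<partial>M) = (\<integral>\<^sup>+\<omega>. F (\<lambda>i\<in>I. Xf (\<omega> i)) \<partial>PiM I Om)"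
proof (rule transfer_gen[OF M.prob_space_axioms _ I(2) _ _ _ Xf_meas F])
  show "finite I" using I(1) finite_subset by blast
  show "M.indep_vars (\<lambda>_. borel) X I" by (rule M.indep_vars_subset[OF indep_X I(1)])
  fix i assume "i \<in> I" then have i: "i \<in> {1..n}" using I by auto
  show "X i \<in> borel_measurable M" using i by simp
  show "distr (Om i) borel Xf = distr M borel (X i)" by (rule distr_Xf[OF i])
qed

lemma transfer_N:
  assumes I: "I \<subseteq> {1..n}" "I \<noteq> {}" and F[measurable]: "F \<in> borel_measurable (PiM I (\<lambda>_. borel))"
  shows "(\<integral>\<^sup>+s. F (\<lambda>i\<in>I. A i s * J i s) \<partial>N) = (\<integral>\<^sup>+\<omega>. F (\<lambda>i\<in>I. Uf (\<omega> i)) \<partial>PiM I Om)"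
proof (rule transfer_gen[OF N.prob_space_axioms _ I(2) _ _ _ Uf_meas F])
  show "finite I" using I(1) finite_subset by blast
  show "N.indep_vars (\<lambda>_. borel) (\<lambda>i s. A i s * J i s) I" by (rule N.indep_vars_subset[OF indep_U I(1)])
  fix i assume "i \<in> I" then have i: "i \<in> {1..n}" using I by auto
  have [measurable]: "A i \<in> borel_measurable N" "J i \<in> borel_measurable N" using AJ_rv[OF i] by auto
  show "(\<lambda>s. A i s * J i s) \<in> borel_measurable N" by simp
  show "distr (Om i) borel Uf = distr N borel (\<lambda>s. A i s * J i s)" by (rule distr_Uf[OF i])
qed

end


context appt begin

lemma Xf_PI:
  assumes l: "l \<in> I" "l \<in> {1..n}"
  shows "integrable (PiM I Om) (\<lambda>\<omega>. Xf (\<omega> l)) \<and> (\<integral>\<omega>. Xf (\<omega> l) \<partial>PiM I Om) = 0"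
proof -
  have D: "distr (PiM I Om) (Om l) (\<lambda>\<omega>. \<omega> l) = Om l" by (rule distr_PiM_component[OF prob_Om l(1)])
  have mc: "(\<lambda>\<omega>. \<omega> l) \<in> PiM I Om \<rightarrow>\<^sub>M Om l" by (rule measurable_component_singleton[OF l(1)])
  have mX: "Xf \<in> borel_measurable (Om l)" by simp
  have i1: "integrable (PiM I Om) (\<lambda>\<omega>. Xf (\<omega> l)) = integrable (Om l) Xf"
    using integrable_distr_eq[OF mc mX] D by simp
  have i2: "integrable (Om l) Xf = integrable (distr (Om l) borel Xf) (\<lambda>x. x)"
    using integrable_distr_eq[OF mX, of "\<lambda>x. x"] by simp
  have i3: "integrable (distr M borel (X l)) (\<lambda>x. x) = integrable M (X l)"
    by (rule integrable_distr_eq[OF X_meas[OF l(2)]]) simp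
  have j1: "(\<integral>\<omega>. Xf (\<omega> l) \<partial>PiM I Om) = (\<integral>y. Xf y \<partial>Om l)"
    using integral_distr[OF mc mX] D by simp
  have j2: "(\<integral>y. Xf y \<partial>Om l) = (\<integral>x. x \<partial>distr (Om l) borel Xf)"
    by (rule integral_distr[OF mX, symmetric]) simp
  have j3: "(\<integral>x. x \<partial>distr M borel (X l)) = (\<integral>s. X l s \<partial>M)"
    by (rule integral_distr[OF X_meas[OF l(2)]]) simp
  have "integrable (PiM I Om) (\<lambda>\<omega>. Xf (\<omega> l))"
    by (simp only: i1 i2 distr_Xf[OF l(2)] i3 X_int[OF l(2)])
  moreover have "(\<integral>\<omega>. Xf (\<omega> l) \<partial>PiM I Om) = 0"
    by (simp only: j1 j2 distr_Xf[OF l(2)] j3 X_mean[OF l(2)])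
  ultimately show ?thesis by blast
qed

lemma SX_PI:
  assumes "K \<subseteq> I" "K \<subseteq> {1..n}"
  shows "integrable (PiM I Om) (\<lambda>\<omega>. \<Sum>l\<in>K. Xf (\<omega> l)) \<and> (\<integral>\<omega>. (\<Sum>l\<in>K. Xf (\<omega> l)) \<partial>PiM I Om) = 0"
proof -
  have "\<And>l. l \<in> K \<Longrightarrow> integrable (PiM I Om) (\<lambda>\<omega>. Xf (\<omega> l)) \<and> (\<integral>\<omega>. Xf (\<omega> l) \<partial>PiM I Om) = 0"
    using assms by (intro Xf_PI) auto
  then show ?thesis by (simp add: integral_sum)
qed

lemma marg:
  assumes fL: "finite L" and LI: "L \<subseteq> I" and G[measurable]: "G \<in> borel_measurable (PiM L (\<lambda>_. OmS))"
  shows "(\<integral>\<^sup>+\<omega>. G (restrict \<omega> L) \<partial>PiM I Om) = (\<integral>\<^sup>+v. G v \<partial>PiM L Om)"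
proof -
  have mr: "(\<lambda>\<omega>. restrict \<omega> L) \<in> measurable (PiM I Om) (PiM L Om)"
    by (rule measurable_restrict_subset[OF LI])
  have "(\<integral>\<^sup>+v. G v \<partial>PiM L Om) = (\<integral>\<^sup>+v. G v \<partial>distr (PiM I Om) (PiM L Om) (\<lambda>x. restrict x L))"
    using product_prob_space.distr_PiM_restrict_finite[OF pps fL LI] by simp
  also have "\<dots> = (\<integral>\<^sup>+\<omega>. G (restrict \<omega> L) \<partial>PiM I Om)"
    by (rule nn_integral_distr[OF mr]) simp
  finally show ?thesis by simp
qed

lemma Phi_repr:
  assumes fK: "finite K0" and Kn: "K0 \<subseteq> {1..n}" and i: "i \<in> {1..n}" "i \<notin> K0"
  shows "(\<integral>\<^sup>+\<omega>. ennreal \<bar>Xf (\<omega> i) + (\<Sum>l\<in>K0. Xf (\<omega> l))\<bar> \<partial>PiM {1..n} Om)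
       = (\<integral>\<^sup>+y. (\<integral>\<^sup>+x. ennreal \<bar>Xf y + (\<Sum>l\<in>K0. Xf (x l))\<bar> \<partial>PiM K0 Om) \<partial>Om i)"
proof -
  let ?G = "\<lambda>v. ennreal \<bar>Xf (v i) + (\<Sum>l\<in>K0. Xf (v l))\<bar>"
  have fJ: "finite (insert i K0)" using fK by simp
  have JI: "insert i K0 \<subseteq> {1..n}" using Kn i by auto
  have mG: "?G \<in> borel_measurable (PiM (insert i K0) (\<lambda>_. OmS))" by simp
  have "(\<integral>\<^sup>+\<omega>. ennreal \<bar>Xf (\<omega> i) + (\<Sum>l\<in>K0. Xf (\<omega> l))\<bar> \<partial>PiM {1..n} Om)
      = (\<integral>\<^sup>+\<omega>. ?G (restrict \<omega> (insert i K0)) \<partial>PiM {1..n} Om)"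
  proof (rule nn_integral_cong)
    fix \<omega>
    have "(\<Sum>l\<in>K0. Xf (restrict \<omega> (insert i K0) l)) = (\<Sum>l\<in>K0. Xf (\<omega> l))" by (rule sum.cong) auto
    then show "ennreal \<bar>Xf (\<omega> i) + (\<Sum>l\<in>K0. Xf (\<omega> l))\<bar> = ?G (restrict \<omega> (insert i K0))" by simp
  qed
  also have "\<dots> = (\<integral>\<^sup>+v. ?G v \<partial>PiM (insert i K0) Om)" by (rule marg[OF fJ JI mG])
  also have "\<dots> = (\<integral>\<^sup>+y. \<integral>\<^sup>+x. ?G (x(i := y)) \<partial>PiM K0 Om \<partial>Om i)"
    by (rule product_sigma_finite.product_nn_integral_insert_rev[OF psf fK i(2)]) (subst meas_PI, rule mG)
  also have "\<dots> = (\<integral>\<^sup>+y. (\<integral>\<^sup>+x. ennreal \<bar>Xf y + (\<Sum>l\<in>K0. Xf (x l))\<bar> \<partial>PiM K0 Om) \<partial>Om i)"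
  proof (rule nn_integral_cong)+
    fix y x
    have "(\<Sum>l\<in>K0. Xf ((x(i := y)) l)) = (\<Sum>l\<in>K0. Xf (x l))" by (rule sum.cong) (use i in auto)
    then show "?G (x(i := y)) = ennreal \<bar>Xf y + (\<Sum>l\<in>K0. Xf (x l))\<bar>" by simp
  qed
  finally show ?thesis .
qed

lemma Phi_M:
  assumes i: "i \<in> {1..n}" and F[measurable]: "F \<in> borel_measurable borel"
  shows "(\<integral>\<^sup>+y. F (Xf y) \<partial>Om i) = (\<integral>\<^sup>+s. F (X i s) \<partial>M)"
proof -
  have "(\<integral>\<^sup>+y. F (Xf y) \<partial>Om i) = (\<integral>\<^sup>+x. F x \<partial>distr (Om i) borel Xf)"
    by (rule nn_integral_distr[symmetric]) simp_all
  also have "\<dots> = (\<integral>\<^sup>+x. F x \<partial>distr M borel (X i))" by (simp add: distr_Xf[OF i])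
  also have "\<dots> = (\<integral>\<^sup>+s. F (X i s) \<partial>M)" by (rule nn_integral_distr) (use i in simp_all)
  finally show ?thesis .
qed

lemma cx_step:
  assumes m: "m \<in> {1..<n}" and cvx: "convex_on UNIV \<phi>"
    and i1: "integrable M (\<lambda>s. \<phi> (X m s))" and i2: "integrable M (\<lambda>s. \<phi> (X (Suc m) s))"
  shows "(\<integral>s. \<phi> (X m s) \<partial>M) \<le> (\<integral>s. \<phi> (X (Suc m) s) \<partial>M)"
proof -
  have "cx_le M (\<lambda>s. B m s - (\<integral>t. B m t \<partial>M)) M (\<lambda>s. B (Suc m) s - (\<integral>t. B (Suc m) t \<partial>M))"
    using dil[OF m] unfolding dil_le_def .
  then have "cx_le M (X m) M (X (Suc m))" by (simp add: X_def[abs_def] \<mu>_def)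
  then show ?thesis using cvx i1 i2 unfolding cx_le_def by blast
qed

lemma cx_chain:
  assumes cvx: "convex_on UNIV \<phi>" and int: "\<And>i. i \<in> {1..n} \<Longrightarrow> integrable M (\<lambda>s. \<phi> (X i s))"
    and j: "1 \<le> j" "j \<le> m" "m \<le> n"
  shows "(\<integral>s. \<phi> (X j s) \<partial>M) \<le> (\<integral>s. \<phi> (X m s) \<partial>M)"
  using j
proof (induction m)
  case 0 then show ?case by simp
next
  case (Suc m)
  show ?case
  proof (cases "j = Suc m")
    case True then show ?thesis by simp
  next
    case False
    then have "j \<le> m" using Suc.prems by simp
    then have "(\<integral>s. \<phi> (X j s) \<partial>M) \<le> (\<integral>s. \<phi> (X m s) \<partial>M)" using Suc.IH Suc.prems by simp
    also have "\<dots> \<le> (\<integral>s. \<phi> (X (Suc m) s) \<partial>M)"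
      using \<open>j \<le> m\<close> Suc.prems by (intro cx_step cvx int) auto
    finally show ?thesis .
  qed
qed

lemma phi_facts:
  assumes fK: "finite K0" and Kn: "K0 \<subseteq> {1..n}"
  shows "(\<integral>\<^sup>+x. ennreal \<bar>t + (\<Sum>l\<in>K0. Xf (x l))\<bar> \<partial>PiM K0 Om)
           = ennreal (\<integral>x. \<bar>t + (\<Sum>l\<in>K0. Xf (x l))\<bar> \<partial>PiM K0 Om)"
    and "convex_on UNIV (\<lambda>t. \<integral>x. \<bar>t + (\<Sum>l\<in>K0. Xf (x l))\<bar> \<partial>PiM K0 Om)"
    and "(\<lambda>t. \<integral>x. \<bar>t + (\<Sum>l\<in>K0. Xf (x l))\<bar> \<partial>PiM K0 Om) \<in> borel_measurable borel"
    and "0 \<le> (\<integral>x. \<bar>t + (\<Sum>l\<in>K0. Xf (x l))\<bar> \<partial>PiM K0 Om)"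
    and "i \<in> {1..n} \<Longrightarrow> integrable M (\<lambda>s. \<integral>x. \<bar>X i s + (\<Sum>l\<in>K0. Xf (x l))\<bar> \<partial>PiM K0 Om)"
proof -
  define Q where "Q = PiM K0 Om"
  define S where "S x = (\<Sum>l\<in>K0. Xf (x l))" for x
  define \<phi> where "\<phi> t = (\<integral>x. \<bar>t + S x\<bar> \<partial>Q)" for t
  interpret Q: prob_space Q unfolding Q_def by (rule prob_PI)
  have SI: "integrable Q S" "(\<integral>x. S x \<partial>Q) = 0"
    using SX_PI[of K0 K0] Kn unfolding Q_def S_def[abs_def] by auto
  have mS[measurable]: "S \<in> borel_measurable Q" using SI(1) by auto
  have int_t: "integrable Q (\<lambda>x. \<bar>t + S x\<bar>)" for t using SI(1) by auto
  have intS: "integrable Q (\<lambda>x. \<bar>S x\<bar>)" using SI(1) by auto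
  show "(\<integral>\<^sup>+x. ennreal \<bar>t + (\<Sum>l\<in>K0. Xf (x l))\<bar> \<partial>PiM K0 Om) = ennreal (\<integral>x. \<bar>t + (\<Sum>l\<in>K0. Xf (x l))\<bar> \<partial>PiM K0 Om)"
    using nn_integral_eq_integral[OF int_t[of t]] unfolding Q_def S_def by simp
  have cvx: "convex_on UNIV \<phi>"
  proof (rule convex_onI)
    fix u a b :: real assume u: "0 < u" "u < 1"
    have "\<phi> ((1 - u) *\<^sub>R a + u *\<^sub>R b) = (\<integral>x. \<bar>(1 - u) * (a + S x) + u * (b + S x)\<bar> \<partial>Q)"
      unfolding \<phi>_def by (intro Bochner_Integration.integral_cong) (auto simp: algebra_simps)
    also have "\<dots> \<le> (\<integral>x. (1 - u) * \<bar>a + S x\<bar> + u * \<bar>b + S x\<bar> \<partial>Q)"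
    proof (rule integral_mono)
      show "integrable Q (\<lambda>x. \<bar>(1 - u) * (a + S x) + u * (b + S x)\<bar>)" using SI(1) by auto
      show "integrable Q (\<lambda>x. (1 - u) * \<bar>a + S x\<bar> + u * \<bar>b + S x\<bar>)" using int_t by auto
      fix x
      have "\<bar>(1 - u) * (a + S x) + u * (b + S x)\<bar> \<le> \<bar>(1 - u) * (a + S x)\<bar> + \<bar>u * (b + S x)\<bar>"
        by (rule abs_triangle_ineq)
      also have "\<dots> = (1 - u) * \<bar>a + S x\<bar> + u * \<bar>b + S x\<bar>" using u by (simp add: abs_mult)
      finally show "\<bar>(1 - u) * (a + S x) + u * (b + S x)\<bar> \<le> (1 - u) * \<bar>a + S x\<bar> + u * \<bar>b + S x\<bar>" .
    qed
    also have "\<dots> = (1 - u) * \<phi> a + u * \<phi> b"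
      unfolding \<phi>_def using int_t by simp
    finally show "\<phi> ((1 - u) *\<^sub>R a + u *\<^sub>R b) \<le> (1 - u) * \<phi> a + u * \<phi> b" .
  qed simp
  then show "convex_on UNIV (\<lambda>t. \<integral>x. \<bar>t + (\<Sum>l\<in>K0. Xf (x l))\<bar> \<partial>PiM K0 Om)"
    unfolding \<phi>_def[abs_def] Q_def S_def .
  have mphi: "\<phi> \<in> borel_measurable borel"
    unfolding \<phi>_def Q_def S_def
    by (rule sigma_finite_measure.borel_measurable_lebesgue_integral[OF sf_PI]) simp
  then show "(\<lambda>t. \<integral>x. \<bar>t + (\<Sum>l\<in>K0. Xf (x l))\<bar> \<partial>PiM K0 Om) \<in> borel_measurable borel"
    unfolding \<phi>_def[abs_def] Q_def S_def .
  have nn: "0 \<le> \<phi> t" for t unfolding \<phi>_def by (rule integral_nonneg_AE) simp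
  then show "0 \<le> (\<integral>x. \<bar>t + (\<Sum>l\<in>K0. Xf (x l))\<bar> \<partial>PiM K0 Om)" unfolding \<phi>_def Q_def S_def .
  have bnd: "\<phi> t \<le> \<bar>t\<bar> + (\<integral>x. \<bar>S x\<bar> \<partial>Q)" for t
  proof -
    have "\<phi> t \<le> (\<integral>x. \<bar>t\<bar> + \<bar>S x\<bar> \<partial>Q)"
      unfolding \<phi>_def by (rule integral_mono) (use int_t intS in auto)
    also have "\<dots> = \<bar>t\<bar> + (\<integral>x. \<bar>S x\<bar> \<partial>Q)" using intS by (simp add: Q.prob_space)
    finally show ?thesis .
  qed
  assume i: "i \<in> {1..n}"
  have "integrable M (\<lambda>s. \<phi> (X i s))"
  proof (rule Bochner_Integration.integrable_bound)
    show "integrable M (\<lambda>s. \<bar>X i s\<bar> + (\<integral>x. \<bar>S x\<bar> \<partial>Q))" using X_int[OF i] by simp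
    show "(\<lambda>s. \<phi> (X i s)) \<in> borel_measurable M" using mphi i by simp
    have "0 \<le> (\<integral>x. \<bar>S x\<bar> \<partial>Q)" by (rule integral_nonneg_AE) simp
    then show "AE s in M. norm (\<phi> (X i s)) \<le> norm (\<bar>X i s\<bar> + (\<integral>x. \<bar>S x\<bar> \<partial>Q))"
      using bnd nn by (intro AE_I2) (simp add: abs_of_nonneg)
  qed
  then show "integrable M (\<lambda>s. \<integral>x. \<bar>X i s + (\<Sum>l\<in>K0. Xf (x l))\<bar> \<partial>PiM K0 Om)"
    unfolding \<phi>_def Q_def S_def .
qed

lemma replace_step:
  assumes fK: "finite K0" and Kn: "K0 \<subseteq> {1..n}" and j: "j \<in> {1..n}" "j \<notin> K0"
    and m: "m \<in> {1..n}" "m \<notin> K0" and jm: "j \<le> m"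
  shows "(\<integral>\<^sup>+\<omega>. ennreal \<bar>Xf (\<omega> j) + (\<Sum>l\<in>K0. Xf (\<omega> l))\<bar> \<partial>PiM {1..n} Om)
       \<le> (\<integral>\<^sup>+\<omega>. ennreal \<bar>Xf (\<omega> m) + (\<Sum>l\<in>K0. Xf (\<omega> l))\<bar> \<partial>PiM {1..n} Om)"
proof -
  define \<phi> where "\<phi> t = (\<integral>x. \<bar>t + (\<Sum>l\<in>K0. Xf (x l))\<bar> \<partial>PiM K0 Om)" for t
  note pf = phi_facts[OF fK Kn, folded \<phi>_def]
  have mphi[measurable]: "\<phi> \<in> borel_measurable borel" using pf(3) unfolding \<phi>_def[abs_def] .
  have key: "(\<integral>\<^sup>+\<omega>. ennreal \<bar>Xf (\<omega> i) + (\<Sum>l\<in>K0. Xf (\<omega> l))\<bar> \<partial>PiM {1..n} Om) = ennreal (\<integral>s. \<phi> (X i s) \<partial>M)"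
    if i: "i \<in> {1..n}" "i \<notin> K0" for i
  proof -
    have "(\<integral>\<^sup>+\<omega>. ennreal \<bar>Xf (\<omega> i) + (\<Sum>l\<in>K0. Xf (\<omega> l))\<bar> \<partial>PiM {1..n} Om)
        = (\<integral>\<^sup>+y. (\<integral>\<^sup>+x. ennreal \<bar>Xf y + (\<Sum>l\<in>K0. Xf (x l))\<bar> \<partial>PiM K0 Om) \<partial>Om i)"
      by (rule Phi_repr[OF fK Kn i])
    also have "\<dots> = (\<integral>\<^sup>+y. ennreal (\<phi> (Xf y)) \<partial>Om i)"
      by (rule nn_integral_cong) (simp add: pf(1) \<phi>_def)
    also have "\<dots> = (\<integral>\<^sup>+s. ennreal (\<phi> (X i s)) \<partial>M)"
      by (rule Phi_M[OF i(1)]) simp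
    also have "\<dots> = ennreal (\<integral>s. \<phi> (X i s) \<partial>M)"
      by (rule nn_integral_eq_integral) (use pf(5)[OF i(1)] pf(4) in \<open>auto simp: \<phi>_def\<close>)
    finally show ?thesis .
  qed
  have "(\<integral>s. \<phi> (X j s) \<partial>M) \<le> (\<integral>s. \<phi> (X m s) \<partial>M)"
  proof (rule cx_chain)
    show "convex_on UNIV \<phi>" using pf(2) unfolding \<phi>_def[abs_def] .
    show "\<And>i. i \<in> {1..n} \<Longrightarrow> integrable M (\<lambda>s. \<phi> (X i s))" using pf(5) unfolding \<phi>_def .
  qed (use j m jm in auto)
  then show ?thesis using key[OF j] key[OF m] by (simp add: ennreal_leI)
qed

lemma dil_sum_aux:
  "\<forall>K. K \<subseteq> {1..n} \<longrightarrow> card K = k \<longrightarrow> \<Sum>K = s \<longrightarrow>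
     (\<integral>\<^sup>+\<omega>. ennreal \<bar>\<Sum>l\<in>{1..k}. Xf (\<omega> l)\<bar> \<partial>PiM {1..n} Om)
     \<le> (\<integral>\<^sup>+\<omega>. ennreal \<bar>\<Sum>l\<in>K. Xf (\<omega> l)\<bar> \<partial>PiM {1..n} Om)"
proof (induction s rule: less_induct)
  case (less s)
  show ?case
  proof (intro allI impI)
    fix K assume Kn: "K \<subseteq> {1..n}" and cK: "card K = k" and sK: "\<Sum>K = s"
    have fK: "finite K" using Kn finite_subset by blast
    show "(\<integral>\<^sup>+\<omega>. ennreal \<bar>\<Sum>l\<in>{1..k}. Xf (\<omega> l)\<bar> \<partial>PiM {1..n} Om)
        \<le> (\<integral>\<^sup>+\<omega>. ennreal \<bar>\<Sum>l\<in>K. Xf (\<omega> l)\<bar> \<partial>PiM {1..n} Om)"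
    proof (cases "K = {1..k}")
      case True then show ?thesis by simp
    next
      case False
      have kn: "k \<le> n" using card_mono[OF _ Kn] cK by simp
      obtain m where mK: "m \<in> K" and mk: "k < m"
      proof (rule ccontr)
        assume "\<not> thesis"
        then have "\<forall>m\<in>K. m \<le> k" using that by force
        then have "K \<subseteq> {1..k}" using Kn by auto
        then have "K = {1..k}" using cK by (intro card_subset_eq) auto
        then show False using False by simp
      qed
      obtain j where jk: "j \<in> {1..k}" and jK: "j \<notin> K"
      proof (rule ccontr)
        assume "\<not> thesis"
        then have "{1..k} \<subseteq> K" using that by force
        then have "{1..k} = K" using cK fK by (intro card_subset_eq) auto
        then show False using False by simp
      qed
      define K0 where "K0 = K - {m}"
      have fK0: "finite K0" and K0n: "K0 \<subseteq> {1..n}" using fK Kn by (auto simp: K0_def)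
      have mK0: "m \<notin> K0" and jK0: "j \<notin> K0" using jK by (auto simp: K0_def)
      have Keq: "K = insert m K0" using mK by (auto simp: K0_def)
      have jn: "j \<in> {1..n}" using jk kn by auto
      have mn: "m \<in> {1..n}" using mK Kn by auto
      have "\<Sum>(insert j K0) < s"
        using sK mk jk fK0 mK0 jK0 unfolding Keq by simp
      moreover have "insert j K0 \<subseteq> {1..n}" using K0n jn by simp
      moreover have "card (insert j K0) = k" using cK fK0 mK0 jK0 unfolding Keq by simp
      ultimately have "(\<integral>\<^sup>+\<omega>. ennreal \<bar>\<Sum>l\<in>{1..k}. Xf (\<omega> l)\<bar> \<partial>PiM {1..n} Om)
          \<le> (\<integral>\<^sup>+\<omega>. ennreal \<bar>\<Sum>l\<in>insert j K0. Xf (\<omega> l)\<bar> \<partial>PiM {1..n} Om)"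
        using less.IH by blast
      also have "\<dots> = (\<integral>\<^sup>+\<omega>. ennreal \<bar>Xf (\<omega> j) + (\<Sum>l\<in>K0. Xf (\<omega> l))\<bar> \<partial>PiM {1..n} Om)"
        using fK0 jK0 by simp
      also have "\<dots> \<le> (\<integral>\<^sup>+\<omega>. ennreal \<bar>Xf (\<omega> m) + (\<Sum>l\<in>K0. Xf (\<omega> l))\<bar> \<partial>PiM {1..n} Om)"
        by (rule replace_step[OF fK0 K0n jn jK0 mn mK0]) (use jk mk in auto)
      also have "\<dots> = (\<integral>\<^sup>+\<omega>. ennreal \<bar>\<Sum>l\<in>K. Xf (\<omega> l)\<bar> \<partial>PiM {1..n} Om)"
        using fK0 mK0 unfolding Keq by simp
      finally show ?thesis .
    qed
  qed
qed

end


lemma meas_sum_comp: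
  assumes "K \<subseteq> I"
  shows "(\<lambda>v. \<Sum>l\<in>K. v l) \<in> borel_measurable (PiM I (\<lambda>_. (borel :: real measure)))"
proof (rule borel_measurable_sum)
  fix l assume "l \<in> K"
  then have "l \<in> I" using assms by auto
  then show "(\<lambda>v. v l) \<in> borel_measurable (PiM I (\<lambda>_. (borel :: real measure)))"
    by (rule measurable_component_singleton)
qed

lemma wait_nonneg: "0 \<le> wait \<tau> b x k"
  by (induction \<tau> b x k rule: wait.induct) auto

lemma idle_nonneg: "0 \<le> idle \<tau> b x k"
  by (induction \<tau> b x k rule: idle.induct) auto

lemma wait_lind: "wait id b x (Suc m) = lindS (\<lambda>i. b i - x i) 0 1 m"
proof (induction m)
  case 0 then show ?case by simp
next
  case (Suc m)
  have "wait id b x (Suc (Suc m)) = max 0 (lindS (\<lambda>i. b i - x i) 0 1 m + (b (Suc m) - x (Suc m)))"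
    using Suc.IH by (simp add: id_def)
  also have "\<dots> = lindS (\<lambda>i. b i - x i) 0 1 (Suc m)"
    by (subst lindS_snoc) simp
  finally show ?case .
qed

lemma wait_lower: "(\<Sum>i=1..m. b (\<tau> i) - x (\<tau> i)) \<le> wait \<tau> b x (Suc m)"
proof (induction m)
  case 0 then show ?case by simp
next
  case (Suc m)
  then show ?case by simp
qed

lemma wait_upper0: "wait \<tau> b x (Suc m) \<le> (\<Sum>i=1..m. \<bar>b (\<tau> i) - x (\<tau> i)\<bar>)"
proof (induction m)
  case 0 then show ?case by simp
next
  case (Suc m)
  have "wait \<tau> b x (Suc (Suc m)) = max 0 (wait \<tau> b x (Suc m) + b (\<tau> (Suc m)) - x (\<tau> (Suc m)))"
    by simp
  also have "\<dots> \<le> (\<Sum>i=1..m. \<bar>b (\<tau> i) - x (\<tau> i)\<bar>) + \<bar>b (\<tau> (Suc m)) - x (\<tau> (Suc m))\<bar>"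
    using Suc.IH wait_nonneg[of \<tau> b x "Suc m"] sum_nonneg[of "{1..m}" "\<lambda>i. \<bar>b (\<tau> i) - x (\<tau> i)\<bar>"]
    by auto
  also have "\<dots> = (\<Sum>i=1..Suc m. \<bar>b (\<tau> i) - x (\<tau> i)\<bar>)" by simp
  finally show ?case .
qed

lemma wait_upper: "wait \<tau> b x k \<le> (\<Sum>i=1..k. \<bar>b (\<tau> i) - x (\<tau> i)\<bar>)"
proof (cases k)
  case 0 then show ?thesis by simp
next
  case (Suc m)
  have "wait \<tau> b x k \<le> (\<Sum>i=1..m. \<bar>b (\<tau> i) - x (\<tau> i)\<bar>)" unfolding Suc by (rule wait_upper0)
  also have "\<dots> \<le> (\<Sum>i=1..k. \<bar>b (\<tau> i) - x (\<tau> i)\<bar>)" unfolding Suc by (intro sum_mono2) auto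
  finally show ?thesis .
qed

lemma idle_upper: "idle \<tau> b x k \<le> (\<Sum>i=1..k. \<bar>b (\<tau> i) - x (\<tau> i)\<bar>)"
proof (cases k)
  case 0 then show ?thesis by simp
next
  case (Suc k')
  show ?thesis
  proof (cases k')
    case 0 then show ?thesis using Suc by (simp add: sum_nonneg)
  next
    case (Suc i)
    have "idle \<tau> b x k = max 0 (- (wait \<tau> b x (Suc i) + b (\<tau> (Suc i)) - x (\<tau> (Suc i))))"
      using \<open>k = Suc k'\<close> Suc by simp
    also have "\<dots> \<le> \<bar>b (\<tau> (Suc i)) - x (\<tau> (Suc i))\<bar>"
      using wait_nonneg[of \<tau> b x "Suc i"] by simp
    also have "\<dots> \<le> (\<Sum>j=1..k. \<bar>b (\<tau> j) - x (\<tau> j)\<bar>)"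
      by (rule member_le_sum[of "Suc i" "{1..k}" "\<lambda>j. \<bar>b (\<tau> j) - x (\<tau> j)\<bar>"]) (use \<open>k = Suc k'\<close> Suc in auto)
    finally show ?thesis .
  qed
qed

lemma wait_idle: "idle \<tau> b x (Suc (Suc i)) = wait \<tau> b x (Suc (Suc i)) - wait \<tau> b x (Suc i) - (b (\<tau> (Suc i)) - x (\<tau> (Suc i)))"
  by simp


context appt begin

lemma transfer_absX:
  assumes K: "K \<subseteq> I" and I: "I \<subseteq> {1..n}" "I \<noteq> {}"
  shows "(\<integral>\<^sup>+s. ennreal \<bar>\<Sum>l\<in>K. X l s\<bar> \<partial>M) = (\<integral>\<^sup>+\<omega>. ennreal \<bar>\<Sum>l\<in>K. Xf (\<omega> l)\<bar> \<partial>PiM I Om)"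
proof -
  have mF: "(\<lambda>v. ennreal \<bar>\<Sum>l\<in>K. v l\<bar>) \<in> borel_measurable (PiM I (\<lambda>_. borel))"
    using meas_sum_comp[OF K] by measurable
  have "(\<integral>\<^sup>+s. ennreal \<bar>\<Sum>l\<in>K. X l s\<bar> \<partial>M) = (\<integral>\<^sup>+s. ennreal \<bar>\<Sum>l\<in>K. (\<lambda>i\<in>I. X i s) l\<bar> \<partial>M)"
    by (rule nn_integral_cong) (use K in \<open>simp add: subset_iff\<close>)
  also have "\<dots> = (\<integral>\<^sup>+\<omega>. ennreal \<bar>\<Sum>l\<in>K. (\<lambda>i\<in>I. Xf (\<omega> i)) l\<bar> \<partial>PiM I Om)"
    by (rule transfer_M[OF I mF])
  also have "\<dots> = (\<integral>\<^sup>+\<omega>. ennreal \<bar>\<Sum>l\<in>K. Xf (\<omega> l)\<bar> \<partial>PiM I Om)"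
    by (rule nn_integral_cong) (use K in \<open>simp add: subset_iff\<close>)
  finally show ?thesis .
qed

lemma transfer_absU:
  assumes K: "K \<subseteq> I" and I: "I \<subseteq> {1..n}" "I \<noteq> {}"
  shows "(\<integral>\<^sup>+s. ennreal \<bar>\<Sum>l\<in>K. A l s * J l s\<bar> \<partial>N) = (\<integral>\<^sup>+\<omega>. ennreal \<bar>\<Sum>l\<in>K. Uf (\<omega> l)\<bar> \<partial>PiM I Om)"
proof -
  have mF: "(\<lambda>v. ennreal \<bar>\<Sum>l\<in>K. v l\<bar>) \<in> borel_measurable (PiM I (\<lambda>_. borel))"
    using meas_sum_comp[OF K] by measurable
  have "(\<integral>\<^sup>+s. ennreal \<bar>\<Sum>l\<in>K. A l s * J l s\<bar> \<partial>N) = (\<integral>\<^sup>+s. ennreal \<bar>\<Sum>l\<in>K. (\<lambda>i\<in>I. A i s * J i s) l\<bar> \<partial>N)"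
    by (rule nn_integral_cong) (use K in \<open>simp add: subset_iff\<close>)
  also have "\<dots> = (\<integral>\<^sup>+\<omega>. ennreal \<bar>\<Sum>l\<in>K. (\<lambda>i\<in>I. Uf (\<omega> i)) l\<bar> \<partial>PiM I Om)"
    by (rule transfer_N[OF I mF])
  also have "\<dots> = (\<integral>\<^sup>+\<omega>. ennreal \<bar>\<Sum>l\<in>K. Uf (\<omega> l)\<bar> \<partial>PiM I Om)"
    by (rule nn_integral_cong) (use K in \<open>simp add: subset_iff\<close>)
  finally show ?thesis .
qed

lemma intX_sum: "K \<subseteq> {1..n} \<Longrightarrow> integrable M (\<lambda>s. \<Sum>l\<in>K. X l s)"
  by (intro Bochner_Integration.integrable_sum X_int) auto

lemma intX_abs: "K \<subseteq> {1..n} \<Longrightarrow> ennreal (\<integral>s. \<bar>\<Sum>l\<in>K. X l s\<bar> \<partial>M) = (\<integral>\<^sup>+s. ennreal \<bar>\<Sum>l\<in>K. X l s\<bar> \<partial>M)"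
  by (rule nn_integral_eq_integral[symmetric]) (use intX_sum in auto)

lemma U_int: assumes i: "i \<in> {1..n}" shows "integrable N (\<lambda>s. A i s * J i s)"
proof -
  have [measurable]: "A i \<in> borel_measurable N" "J i \<in> borel_measurable N" using AJ_rv[OF i] by auto
  interpret Ad: prob_space "Ad i" by (rule prob_Ad)
  interpret Yd: prob_space "Yd i" by (rule prob_Yd)
  have "(\<integral>\<^sup>+w. ennreal \<bar>Uf w\<bar> \<partial>Om i) = (\<integral>\<^sup>+w. (if snd (snd (snd w)) then (\<lambda>z. ennreal \<bar>snd z\<bar>) (fst (snd w), fst (snd (snd w))) else (\<lambda>y. 0) (fst w)) \<partial>Om i)"
    by (rule nn_integral_cong) (simp add: Uf_def)
  also have "\<dots> = ennreal (p i) * (\<integral>\<^sup>+a. \<integral>\<^sup>+b. (\<lambda>z. ennreal \<bar>snd z\<bar>) (a, b) \<partial>Ad i \<partial>Ad i) + ennreal (1 - p i) * (\<integral>\<^sup>+y. (\<lambda>y. 0) y \<partial>Yd i)"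
    by (rule Om_expand[OF i]) simp_all
  also have "\<dots> = ennreal (p i) * (\<integral>\<^sup>+b. ennreal \<bar>b\<bar> \<partial>Ad i)"
    by (simp add: Ad.emeasure_space_1)
  also have "\<dots> = (\<integral>\<^sup>+x. ennreal (h i x) * ennreal \<bar>x\<bar> \<partial>lborel)"
    by (rule Ad_int[OF i]) simp
  also have "\<dots> \<le> (\<integral>\<^sup>+x. ennreal (f i x) * ennreal \<bar>x\<bar> \<partial>lborel)"
    by (intro nn_integral_mono mult_right_mono ennreal_leI h_le[OF i]) simp_all
  also have "\<dots> = (\<integral>\<^sup>+w. ennreal \<bar>Xf w\<bar> \<partial>Om i)"
    by (rule int_Xf[OF i, symmetric]) simp
  also have "\<dots> = (\<integral>\<^sup>+s. ennreal \<bar>X i s\<bar> \<partial>M)"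
    by (rule Phi_M[OF i]) simp
  also have "\<dots> < \<infinity>"
    using X_int[OF i] by (simp add: integrable_iff_bounded)
  finally have fin: "(\<integral>\<^sup>+w. ennreal \<bar>Uf w\<bar> \<partial>Om i) < \<infinity>" .
  have "integrable (Om i) Uf"
    by (rule integrableI_bounded) (use fin in simp_all)
  then have "integrable (distr (Om i) borel Uf) (\<lambda>x. x)"
    by (subst integrable_distr_eq) simp_all
  then have "integrable (distr N borel (\<lambda>s. A i s * J i s)) (\<lambda>x. x)"
    using distr_Uf[OF i] by simp
  then show ?thesis
    by (subst (asm) integrable_distr_eq) simp_all
qed

lemma intU_abs: "K \<subseteq> {1..n} \<Longrightarrow> ennreal (\<integral>s. \<bar>\<Sum>l\<in>K. A l s * J l s\<bar> \<partial>N) = (\<integral>\<^sup>+s. ennreal \<bar>\<Sum>l\<in>K. A l s * J l s\<bar> \<partial>N)"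
proof -
  assume K: "K \<subseteq> {1..n}"
  have "integrable N (\<lambda>s. \<Sum>l\<in>K. A l s * J l s)" by (intro Bochner_Integration.integrable_sum U_int) (use K in auto)
  then show ?thesis by (intro nn_integral_eq_integral[symmetric]) auto
qed

lemma X_abs_pos:
  assumes i: "i \<in> {1..n}"
  shows "0 < (\<integral>\<^sup>+s. ennreal \<bar>X i s\<bar> \<partial>M)"
proof (rule ccontr)
  assume "\<not> 0 < (\<integral>\<^sup>+s. ennreal \<bar>X i s\<bar> \<partial>M)"
  then have "(\<integral>\<^sup>+s. ennreal \<bar>X i s\<bar> \<partial>M) = 0" by (simp add: not_gr_zero)
  then have "AE s in M. ennreal \<bar>X i s\<bar> = 0" using i by (subst (asm) nn_integral_0_iff_AE) simp_all
  then have AE0: "AE s in M. X i s = 0" by eventually_elim simp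
  have AEd: "AE x in distr M lborel (X i). x = 0"
    using AE0 i by (subst AE_distr_iff) simp_all
  have "AE x in density lborel (\<lambda>x. ennreal (f i x)). x = 0"
    using back_subst[of "\<lambda>K. AE x in K. x = 0", OF AEd distrX[OF i]] .
  then have "AE x in lborel. 0 < ennreal (f i x) \<longrightarrow> x = 0" using i by (subst (asm) AE_density) simp_all
  then have "AE x in lborel. ennreal (f i x) = 0"
    using AE_lborel_singleton[of "0::real"] by eventually_elim (auto simp: not_less ennreal_eq_0_iff)
  then have "(\<integral>\<^sup>+x. ennreal (f i x) \<partial>lborel) = (\<integral>\<^sup>+x. 0 \<partial>(lborel :: real measure))"
    by (rule nn_integral_cong_AE)
  then show False using f_nn_int[OF i] by simp
qed

lemma S_perm:
  assumes \<tau>: "\<tau> permutes {1..n}" and m: "m \<le> n"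
  shows "(\<integral>s. \<bar>\<Sum>i=1..m. X i s\<bar> \<partial>M) \<le> (\<integral>s. \<bar>\<Sum>i=1..m. X (\<tau> i) s\<bar> \<partial>M)"
proof -
  define K where "K = \<tau> ` {1..m}"
  have inj: "inj_on \<tau> {1..m}" using permutes_inj_on[OF \<tau>] .
  have Kn: "K \<subseteq> {1..n}" unfolding K_def
    by (rule image_subsetI, rule permutes_in_image[OF \<tau>, THEN iffD2]) (use m in auto)
  have cK: "card K = m" unfolding K_def using card_image[OF inj] by simp
  have re: "(\<Sum>i=1..m. X (\<tau> i) s) = (\<Sum>l\<in>K. X l s)" for s
    unfolding K_def by (simp only: sum.reindex[OF inj] comp_def)
  have mn: "{1..m} \<subseteq> {1..n}" using m by auto
  have ne: "{1..n} \<noteq> {}" using n1 by auto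
  have "ennreal (\<integral>s. \<bar>\<Sum>i=1..m. X i s\<bar> \<partial>M) = (\<integral>\<^sup>+\<omega>. ennreal \<bar>\<Sum>l\<in>{1..m}. Xf (\<omega> l)\<bar> \<partial>PiM {1..n} Om)"
    unfolding intX_abs[OF mn] by (rule transfer_absX[OF mn order_refl ne])
  also have "\<dots> \<le> (\<integral>\<^sup>+\<omega>. ennreal \<bar>\<Sum>l\<in>K. Xf (\<omega> l)\<bar> \<partial>PiM {1..n} Om)"
    by (rule dil_sum_aux[of m "\<Sum>K", rule_format, OF Kn cK refl])
  also have "\<dots> = ennreal (\<integral>s. \<bar>\<Sum>l\<in>K. X l s\<bar> \<partial>M)"
    unfolding intX_abs[OF Kn] by (rule transfer_absX[OF Kn order_refl ne, symmetric])
  also have "\<dots> = ennreal (\<integral>s. \<bar>\<Sum>i=1..m. X (\<tau> i) s\<bar> \<partial>M)"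
    by (simp only: re)
  finally have "ennreal (\<integral>s. \<bar>\<Sum>i=1..m. X i s\<bar> \<partial>M) \<le> ennreal (\<integral>s. \<bar>\<Sum>i=1..m. X (\<tau> i) s\<bar> \<partial>M)" .
  moreover have "0 \<le> (\<integral>s. \<bar>\<Sum>i=1..m. X (\<tau> i) s\<bar> \<partial>M)" by (rule integral_nonneg_AE) simp
  ultimately show ?thesis using ennreal_le_iff by blast
qed

lemma S_pos:
  assumes m: "1 \<le> m" "m \<le> n"
  shows "0 < (\<integral>s. \<bar>\<Sum>i=1..m. X i s\<bar> \<partial>M)"
proof -
  have one: "(1::nat) \<in> {1..n}" using n1 by simp
  have K0: "finite {2..m}" "{2..m} \<subseteq> {1..n}" "(1::nat) \<notin> {2..m}" using m by auto
  have ins: "{1..m} = insert 1 {2..m}" using m by auto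
  have mn: "{1..m} \<subseteq> {1..n}" using m by auto
  have ne: "{1..n} \<noteq> {}" using n1 by auto
  have SI: "integrable (PiM {2..m} Om) (\<lambda>x. \<Sum>l\<in>{2..m}. Xf (x l))" "(\<integral>x. (\<Sum>l\<in>{2..m}. Xf (x l)) \<partial>PiM {2..m} Om) = 0"
    using SX_PI[of "{2..m}" "{2..m}"] K0 by auto
  have "0 < (\<integral>\<^sup>+s. ennreal \<bar>X 1 s\<bar> \<partial>M)" by (rule X_abs_pos[OF one])
  also have "\<dots> = (\<integral>\<^sup>+y. ennreal \<bar>Xf y\<bar> \<partial>Om 1)" by (rule Phi_M[OF one, symmetric]) simp
  also have "\<dots> \<le> (\<integral>\<^sup>+y. (\<integral>\<^sup>+x. ennreal \<bar>Xf y + (\<Sum>l\<in>{2..m}. Xf (x l))\<bar> \<partial>PiM {2..m} Om) \<partial>Om 1)"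
    by (rule nn_integral_mono) (rule jensen_abs[OF prob_PI SI])
  also have "\<dots> = (\<integral>\<^sup>+\<omega>. ennreal \<bar>Xf (\<omega> 1) + (\<Sum>l\<in>{2..m}. Xf (\<omega> l))\<bar> \<partial>PiM {1..n} Om)"
    by (rule Phi_repr[symmetric]) (use K0 one in auto)
  also have "\<dots> = (\<integral>\<^sup>+\<omega>. ennreal \<bar>\<Sum>l\<in>{1..m}. Xf (\<omega> l)\<bar> \<partial>PiM {1..n} Om)"
    unfolding ins using K0 by simp
  also have "\<dots> = ennreal (\<integral>s. \<bar>\<Sum>i=1..m. X i s\<bar> \<partial>M)"
    using intX_abs[OF mn] transfer_absX[OF mn order_refl ne] by simp
  finally show ?thesis by simp
qed

end


context appt begin

lemma tau_in: "\<tau> permutes {1..n} \<Longrightarrow> i \<in> {1..n} \<Longrightarrow> \<tau> i \<in> {1..n}"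
  by (rule permutes_in_image[THEN iffD2])

lemma wait_meas:
  assumes \<tau>: "\<tau> permutes {1..n}"
  shows "k \<le> Suc n \<Longrightarrow> (\<lambda>s. wait \<tau> (\<lambda>j. B j s) \<mu> k) \<in> borel_measurable M"
proof (induction k rule: less_induct)
  case (less k)
  show ?case
  proof (cases k)
    case 0 then show ?thesis by simp
  next
    case (Suc k')
    show ?thesis
    proof (cases k')
      case 0 then show ?thesis using Suc by simp
    next
      case (Suc i)
      have IH: "(\<lambda>s. wait \<tau> (\<lambda>j. B j s) \<mu> (Suc i)) \<in> borel_measurable M"
        by (rule less.IH) (use less.prems \<open>k = Suc k'\<close> Suc in auto)
      have "\<tau> (Suc i) \<in> {1..n}" by (rule tau_in[OF \<tau>]) (use less.prems \<open>k = Suc k'\<close> Suc in auto)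
      then have Bm: "B (\<tau> (Suc i)) \<in> borel_measurable M" by (rule B_rv)
      have "(\<lambda>s. max 0 (wait \<tau> (\<lambda>j. B j s) \<mu> (Suc i) + B (\<tau> (Suc i)) s - \<mu> (\<tau> (Suc i)))) \<in> borel_measurable M"
        by (intro borel_measurable_max borel_measurable_const borel_measurable_diff borel_measurable_add IH Bm)
      then show ?thesis unfolding \<open>k = Suc k'\<close> Suc wait.simps .
    qed
  qed
qed

lemma idle_meas:
  assumes \<tau>: "\<tau> permutes {1..n}" and k: "k \<le> Suc n"
  shows "(\<lambda>s. idle \<tau> (\<lambda>j. B j s) \<mu> k) \<in> borel_measurable M"
proof (cases k)
  case 0 then show ?thesis by simp
next
  case (Suc k')
  show ?thesis
  proof (cases k')
    case 0 then show ?thesis using Suc by simp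
  next
    case (Suc i)
    have "(\<lambda>s. wait \<tau> (\<lambda>j. B j s) \<mu> (Suc i)) \<in> borel_measurable M"
      by (rule wait_meas[OF \<tau>]) (use k \<open>k = Suc k'\<close> Suc in auto)
    have "\<tau> (Suc i) \<in> {1..n}" by (rule tau_in[OF \<tau>]) (use k \<open>k = Suc k'\<close> Suc in auto)
    then have Bm: "B (\<tau> (Suc i)) \<in> borel_measurable M" by (rule B_rv)
    have "(\<lambda>s. max 0 (- (wait \<tau> (\<lambda>j. B j s) \<mu> (Suc i) + B (\<tau> (Suc i)) s - \<mu> (\<tau> (Suc i))))) \<in> borel_measurable M"
      by (intro borel_measurable_max borel_measurable_const borel_measurable_diff borel_measurable_add
          borel_measurable_uminus Bm) fact
    then show ?thesis unfolding \<open>k = Suc k'\<close> Suc idle.simps .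
  qed
qed

lemma absX_int: "\<tau> permutes {1..n} \<Longrightarrow> K \<subseteq> {1..n} \<Longrightarrow>
    integrable M (\<lambda>s. \<Sum>i\<in>K. \<bar>B (\<tau> i) s - \<mu> (\<tau> i)\<bar>)"
  by (intro Bochner_Integration.integrable_sum integrable_abs)
     (use X_int tau_in in \<open>auto simp: X_def[abs_def]\<close>)

lemma wait_int:
  assumes \<tau>: "\<tau> permutes {1..n}" and m: "m \<le> n"
  shows "integrable M (\<lambda>s. wait \<tau> (\<lambda>j. B j s) \<mu> (Suc m))"
proof (rule Bochner_Integration.integrable_bound[OF absX_int[OF \<tau>, of "{1..m}"]])
  show "{1..m} \<subseteq> {1..n}" using m by auto
  show "(\<lambda>s. wait \<tau> (\<lambda>j. B j s) \<mu> (Suc m)) \<in> borel_measurable M" by (rule wait_meas[OF \<tau>]) (use m in simp)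
  show "AE s in M. norm (wait \<tau> (\<lambda>j. B j s) \<mu> (Suc m)) \<le> norm (\<Sum>i\<in>{1..m}. \<bar>B (\<tau> i) s - \<mu> (\<tau> i)\<bar>)"
    using wait_upper0 wait_nonneg by (intro AE_I2) (simp add: sum_nonneg)
qed

lemma idle_int:
  assumes \<tau>: "\<tau> permutes {1..n}" and k: "k \<le> n"
  shows "integrable M (\<lambda>s. idle \<tau> (\<lambda>j. B j s) \<mu> k)"
proof (rule Bochner_Integration.integrable_bound[OF absX_int[OF \<tau>, of "{1..k}"]])
  show "{1..k} \<subseteq> {1..n}" using k by auto
  show "(\<lambda>s. idle \<tau> (\<lambda>j. B j s) \<mu> k) \<in> borel_measurable M" by (rule idle_meas[OF \<tau>]) (use k in simp)
  show "AE s in M. norm (idle \<tau> (\<lambda>j. B j s) \<mu> k) \<le> norm (\<Sum>i\<in>{1..k}. \<bar>B (\<tau> i) s - \<mu> (\<tau> i)\<bar>)"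
    using idle_upper idle_nonneg by (intro AE_I2) (simp add: sum_nonneg)
qed

lemma telescope:
  assumes \<tau>: "\<tau> permutes {1..n}"
  shows "k \<le> n \<Longrightarrow> (\<Sum>i=1..k. \<integral>s. idle \<tau> (\<lambda>j. B j s) \<mu> i \<partial>M) = (\<integral>s. wait \<tau> (\<lambda>j. B j s) \<mu> k \<partial>M)"
proof (induction k)
  case 0 then show ?case by simp
next
  case (Suc k)
  have "(\<Sum>i=1..Suc k. \<integral>s. idle \<tau> (\<lambda>j. B j s) \<mu> i \<partial>M)
      = (\<Sum>i=1..k. \<integral>s. idle \<tau> (\<lambda>j. B j s) \<mu> i \<partial>M) + (\<integral>s. idle \<tau> (\<lambda>j. B j s) \<mu> (Suc k) \<partial>M)"
    by simp
  also have "\<dots> = (\<integral>s. wait \<tau> (\<lambda>j. B j s) \<mu> k \<partial>M) + (\<integral>s. idle \<tau> (\<lambda>j. B j s) \<mu> (Suc k) \<partial>M)"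
    using Suc by simp
  also have "\<dots> = (\<integral>s. wait \<tau> (\<lambda>j. B j s) \<mu> (Suc k) \<partial>M)"
  proof (cases k)
    case 0 then show ?thesis by simp
  next
    case (Suc i)
    have ti: "\<tau> (Suc i) \<in> {1..n}" by (rule tau_in[OF \<tau>]) (use Suc.prems \<open>k = Suc i\<close> in auto)
    have i1: "integrable M (\<lambda>s. wait \<tau> (\<lambda>j. B j s) \<mu> (Suc (Suc i)))"
      by (rule wait_int[OF \<tau>]) (use Suc.prems \<open>k = Suc i\<close> in auto)
    have i2: "integrable M (\<lambda>s. wait \<tau> (\<lambda>j. B j s) \<mu> (Suc i))"
      by (rule wait_int[OF \<tau>]) (use Suc.prems \<open>k = Suc i\<close> in auto)
    have i3: "integrable M (\<lambda>s. B (\<tau> (Suc i)) s - \<mu> (\<tau> (Suc i)))"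
      using X_int[OF ti] by (simp add: X_def[abs_def])
    have m3: "(\<integral>s. B (\<tau> (Suc i)) s - \<mu> (\<tau> (Suc i)) \<partial>M) = 0"
      using X_mean[OF ti] by (simp add: X_def[abs_def])
    have "(\<integral>s. idle \<tau> (\<lambda>j. B j s) \<mu> (Suc (Suc i)) \<partial>M)
        = (\<integral>s. wait \<tau> (\<lambda>j. B j s) \<mu> (Suc (Suc i)) - wait \<tau> (\<lambda>j. B j s) \<mu> (Suc i) - (B (\<tau> (Suc i)) s - \<mu> (\<tau> (Suc i))) \<partial>M)"
      by (simp only: wait_idle)
    also have "\<dots> = (\<integral>s. wait \<tau> (\<lambda>j. B j s) \<mu> (Suc (Suc i)) \<partial>M) - (\<integral>s. wait \<tau> (\<lambda>j. B j s) \<mu> (Suc i) \<partial>M)"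
      using i1 i2 i3 m3 by simp
    finally show ?thesis using \<open>k = Suc i\<close> by simp
  qed
  finally show ?case .
qed

lemma cost_eq:
  assumes \<tau>: "\<tau> permutes {1..n}"
  shows "cost M B n \<tau> \<mu> \<omega> = \<omega> * (\<integral>s. wait \<tau> (\<lambda>j. B j s) \<mu> n \<partial>M)
          + (1 - \<omega>) * (\<Sum>i=1..n. \<integral>s. wait \<tau> (\<lambda>j. B j s) \<mu> i \<partial>M)"
  unfolding cost_def using telescope[OF \<tau> order_refl] by simp

lemma cost_nonneg: "0 \<le> cost M B n \<tau> \<mu> \<omega>"
  unfolding cost_def using \<omega>
  by (intro add_nonneg_nonneg mult_nonneg_nonneg sum_nonneg integral_nonneg_AE AE_I2)
     (simp_all add: idle_nonneg wait_nonneg)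

lemma upper_slot:
  assumes m: "1 \<le> m" "m \<le> n"
  shows "(\<integral>s. wait id (\<lambda>j. B j s) \<mu> (Suc m) \<partial>M)
       \<le> (\<integral>s. \<bar>\<Sum>i=1..m. X i s\<bar> \<partial>M) + (\<integral>s. \<bar>\<Sum>i=1..m. A i s * J i s\<bar> \<partial>N)"
proof -
  have mn: "{1..m} \<subseteq> {1..n}" using m by auto
  have ne: "{1..m} \<noteq> {}" using m by auto
  have idp: "id permutes {1..n}" by (rule permutes_id)
  let ?F = "\<lambda>v. ennreal (lindS v 0 1 m)"
  have mF: "?F \<in> borel_measurable (PiM {1..m} (\<lambda>_. borel))"
  proof -
    have "(\<lambda>v. lindS (\<lambda>i. v i) ((\<lambda>_. 0) v) 1 m) \<in> borel_measurable (PiM {1..m} (\<lambda>_. (borel :: real measure)))"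
    proof (rule lindS_meas)
      fix i :: nat assume "1 \<le> i" "i < 1 + m"
      then have "i \<in> {1..m}" by auto
      then show "(\<lambda>v. v i) \<in> borel_measurable (PiM {1..m} (\<lambda>_. (borel :: real measure)))"
        by (rule measurable_component_singleton)
    qed simp
    then show ?thesis by (rule measurable_compose[OF _ measurable_ennreal])
  qed
  have wl: "wait id (\<lambda>j. B j s) \<mu> (Suc m) = lindS (\<lambda>i\<in>{1..m}. X i s) 0 1 m" for s
    unfolding wait_lind by (rule lindS_cong) (auto simp: X_def)
  have eqI: "{1..<1 + m} = {1..m}" by auto
  have "ennreal (\<integral>s. wait id (\<lambda>j. B j s) \<mu> (Suc m) \<partial>M) = (\<integral>\<^sup>+s. ennreal (wait id (\<lambda>j. B j s) \<mu> (Suc m)) \<partial>M)"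
    by (rule nn_integral_eq_integral[symmetric]) (use wait_int[OF idp m(2)] wait_nonneg in auto)
  also have "\<dots> = (\<integral>\<^sup>+s. ?F (\<lambda>i\<in>{1..m}. X i s) \<partial>M)"
    by (simp only: wl)
  also have "\<dots> = (\<integral>\<^sup>+\<omega>. ?F (\<lambda>i\<in>{1..m}. Xf (\<omega> i)) \<partial>PiM {1..m} Om)"
    by (rule transfer_M[OF mn ne mF])
  also have "\<dots> = (\<integral>\<^sup>+\<omega>. ennreal (lindS (\<lambda>i. Xf (\<omega> i)) 0 1 m) \<partial>PiM {1..<1 + m} Om)"
    unfolding eqI
  proof (rule nn_integral_cong)
    fix x :: "nat \<Rightarrow> real \<times> real \<times> real \<times> bool"
    have "lindS (\<lambda>i\<in>{1..m}. Xf (x i)) 0 1 m = lindS (\<lambda>i. Xf (x i)) 0 1 m" by (rule lindS_cong) auto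
    then show "?F (\<lambda>i\<in>{1..m}. Xf (x i)) = ennreal (lindS (\<lambda>i. Xf (x i)) 0 1 m)" by simp
  qed
  also have "\<dots> \<le> (\<integral>\<^sup>+\<omega>. ennreal \<bar>0 + (\<Sum>i\<in>{1..<1 + m}. Zf (\<omega> i))\<bar> \<partial>PiM {1..<1 + m} Om)"
    by (rule lind_bound) (use mn in auto)
  also have "\<dots> = (\<integral>\<^sup>+\<omega>. ennreal \<bar>\<Sum>i\<in>{1..m}. Zf (\<omega> i)\<bar> \<partial>PiM {1..m} Om)"
    unfolding eqI by simp
  also have "\<dots> \<le> (\<integral>\<^sup>+\<omega>. ennreal \<bar>\<Sum>i\<in>{1..m}. Xf (\<omega> i)\<bar> \<partial>PiM {1..m} Om) + (\<integral>\<^sup>+\<omega>. ennreal \<bar>\<Sum>i\<in>{1..m}. Uf (\<omega> i)\<bar> \<partial>PiM {1..m} Om)"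
    by (rule tri_bound) simp
  also have "\<dots> = ennreal (\<integral>s. \<bar>\<Sum>i=1..m. X i s\<bar> \<partial>M) + ennreal (\<integral>s. \<bar>\<Sum>i=1..m. A i s * J i s\<bar> \<partial>N)"
    unfolding intX_abs[OF mn] intU_abs[OF mn]
    using transfer_absX[OF order_refl mn ne] transfer_absU[OF order_refl mn ne] by simp
  also have "\<dots> = ennreal ((\<integral>s. \<bar>\<Sum>i=1..m. X i s\<bar> \<partial>M) + (\<integral>s. \<bar>\<Sum>i=1..m. A i s * J i s\<bar> \<partial>N))"
    by (rule ennreal_plus[symmetric]) (auto intro!: integral_nonneg_AE)
  finally show ?thesis
    by (subst (asm) ennreal_le_iff) (auto intro!: add_nonneg_nonneg integral_nonneg_AE)
qed

lemma lower_slot: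
  assumes \<tau>: "\<tau> permutes {1..n}" and m: "m \<le> n"
  shows "(\<integral>s. \<bar>\<Sum>i=1..m. X i s\<bar> \<partial>M) / 2 \<le> (\<integral>s. wait \<tau> (\<lambda>j. B j s) \<mu> (Suc m) \<partial>M)"
proof -
  let ?S = "\<lambda>s. \<Sum>i=1..m. X (\<tau> i) s"
  have ti: "\<And>i. i \<in> {1..m} \<Longrightarrow> \<tau> i \<in> {1..n}" using m by (intro tau_in[OF \<tau>]) auto
  have intS: "integrable M ?S" by (intro Bochner_Integration.integrable_sum X_int ti)
  have meanS: "(\<integral>s. ?S s \<partial>M) = 0" using ti X_int X_mean by (simp add: integral_sum)
  have pw: "(\<bar>?S s\<bar> + ?S s) / 2 \<le> wait \<tau> (\<lambda>j. B j s) \<mu> (Suc m)" for s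
  proof -
    have "?S s \<le> wait \<tau> (\<lambda>j. B j s) \<mu> (Suc m)" using wait_lower[of "\<lambda>j. B j s" \<tau> \<mu> m] by (simp add: X_def)
    then show ?thesis using wait_nonneg[of \<tau> "\<lambda>j. B j s" \<mu> "Suc m"] by (cases "0 \<le> ?S s") auto
  qed
  have "(\<integral>s. \<bar>\<Sum>i=1..m. X i s\<bar> \<partial>M) / 2 \<le> (\<integral>s. \<bar>?S s\<bar> \<partial>M) / 2"
    using S_perm[OF \<tau> m] by simp
  also have "\<dots> = (\<integral>s. (\<bar>?S s\<bar> + ?S s) / 2 \<partial>M)"
    using intS meanS by simp
  also have "\<dots> \<le> (\<integral>s. wait \<tau> (\<lambda>j. B j s) \<mu> (Suc m) \<partial>M)"
    by (rule integral_mono[OF _ wait_int[OF \<tau> m] pw]) (use intS in simp)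
  finally show ?thesis .
qed

lemma slot:
  assumes \<tau>: "\<tau> permutes {1..n}" and k: "k \<in> {1..n}" and R: "0 \<le> R"
    and ET: "\<And>m. m \<in> {1..n} \<Longrightarrow> (\<integral>s. \<bar>\<Sum>i=1..m. A i s * J i s\<bar> \<partial>N) \<le> R * (\<integral>s. \<bar>\<Sum>i=1..m. X i s\<bar> \<partial>M)"
  shows "(\<integral>s. wait id (\<lambda>j. B j s) \<mu> k \<partial>M) \<le> (2 + 2 * R) * (\<integral>s. wait \<tau> (\<lambda>j. B j s) \<mu> k \<partial>M)"
proof -
  obtain m where km: "k = Suc m" using k by (cases k) auto
  show ?thesis
  proof (cases m)
    case 0 then show ?thesis using km by simp
  next
    case (Suc m')
    have m1: "1 \<le> m" "m \<le> n" using Suc k km by auto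
    let ?ES = "\<integral>s. \<bar>\<Sum>i=1..m. X i s\<bar> \<partial>M"
    have "(\<integral>s. wait id (\<lambda>j. B j s) \<mu> k \<partial>M) \<le> ?ES + (\<integral>s. \<bar>\<Sum>i=1..m. A i s * J i s\<bar> \<partial>N)"
      unfolding km by (rule upper_slot[OF m1])
    also have "\<dots> \<le> ?ES + R * ?ES" using ET[of m] m1 by simp
    also have "\<dots> = (1 + R) * ?ES" by (simp add: algebra_simps)
    also have "\<dots> \<le> (1 + R) * (2 * (\<integral>s. wait \<tau> (\<lambda>j. B j s) \<mu> k \<partial>M))"
      using lower_slot[OF \<tau> m1(2)] R unfolding km by (intro mult_left_mono) auto
    also have "\<dots> = (2 + 2 * R) * (\<integral>s. wait \<tau> (\<lambda>j. B j s) \<mu> k \<partial>M)" by (simp add: algebra_simps)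
    finally show ?thesis .
  qed
qed

lemma cost_cmp:
  assumes \<tau>: "\<tau> permutes {1..n}" and R: "0 \<le> R"
    and ET: "\<And>m. m \<in> {1..n} \<Longrightarrow> (\<integral>s. \<bar>\<Sum>i=1..m. A i s * J i s\<bar> \<partial>N) \<le> R * (\<integral>s. \<bar>\<Sum>i=1..m. X i s\<bar> \<partial>M)"
  shows "cost M B n id \<mu> \<omega> \<le> (2 + 2 * R) * cost M B n \<tau> \<mu> \<omega>"
proof -
  let ?W = "\<lambda>\<sigma> k. \<integral>s. wait \<sigma> (\<lambda>j. B j s) \<mu> k \<partial>M"
  have sl: "\<And>k. k \<in> {1..n} \<Longrightarrow> ?W id k \<le> (2 + 2 * R) * ?W \<tau> k"
    by (rule slot[OF \<tau> _ R ET])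
  have nn: "n \<in> {1..n}" using n1 by simp
  have "cost M B n id \<mu> \<omega> = \<omega> * ?W id n + (1 - \<omega>) * (\<Sum>i=1..n. ?W id i)"
    by (rule cost_eq[OF permutes_id])
  also have "\<dots> \<le> \<omega> * ((2 + 2 * R) * ?W \<tau> n) + (1 - \<omega>) * (\<Sum>i=1..n. (2 + 2 * R) * ?W \<tau> i)"
    using \<omega> sl[OF nn] sl by (intro add_mono mult_left_mono sum_mono) auto
  also have "\<dots> = (2 + 2 * R) * (\<omega> * ?W \<tau> n + (1 - \<omega>) * (\<Sum>i=1..n. ?W \<tau> i))"
    by (simp add: algebra_simps sum_distrib_left)
  also have "\<dots> = (2 + 2 * R) * cost M B n \<tau> \<mu> \<omega>"
    using cost_eq[OF \<tau>] by simp
  finally show ?thesis .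
qed

lemma main:
  "cost M B n id \<mu> \<omega> / Min ((\<lambda>\<tau>. cost M B n \<tau> \<mu> \<omega>) ` {\<tau>. \<tau> permutes {1..n}})
   \<le> 2 + 2 * Max ((\<lambda>k. (\<integral>s. \<bar>\<Sum>i=1..k. A i s * J i s\<bar> \<partial>N)
                       / (\<integral>s. \<bar>\<Sum>i=1..k. B i s - \<mu> i\<bar> \<partial>M)) ` {1..n})"
proof -
  define r where "r k = (\<integral>s. \<bar>\<Sum>i=1..k. A i s * J i s\<bar> \<partial>N) / (\<integral>s. \<bar>\<Sum>i=1..k. X i s\<bar> \<partial>M)" for k
  have rr: "(\<lambda>k. (\<integral>s. \<bar>\<Sum>i=1..k. A i s * J i s\<bar> \<partial>N) / (\<integral>s. \<bar>\<Sum>i=1..k. B i s - \<mu> i\<bar> \<partial>M)) = r"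
    by (rule ext) (simp add: r_def X_def)
  define R where "R = Max (r ` {1..n})"
  have fin: "finite (r ` {1..n})" by simp
  have rle: "r k \<le> R" if "k \<in> {1..n}" for k unfolding R_def using that fin by (intro Max_ge) auto
  have ESpos: "0 < (\<integral>s. \<bar>\<Sum>i=1..k. X i s\<bar> \<partial>M)" if "k \<in> {1..n}" for k
    using S_pos that by auto
  have ETnn: "0 \<le> (\<integral>s. \<bar>\<Sum>i=1..k. A i s * J i s\<bar> \<partial>N)" for k by (rule integral_nonneg_AE) simp
  have ET: "(\<integral>s. \<bar>\<Sum>i=1..m. A i s * J i s\<bar> \<partial>N) \<le> R * (\<integral>s. \<bar>\<Sum>i=1..m. X i s\<bar> \<partial>M)" if "m \<in> {1..n}" for m
    using rle[OF that] ESpos[OF that] unfolding r_def by (simp add: divide_le_eq)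
  have R0: "0 \<le> R"
  proof -
    have "0 \<le> r 1" unfolding r_def using ETnn[of 1] ESpos[of 1] n1 by simp
    also have "\<dots> \<le> R" using n1 by (intro rle) simp
    finally show ?thesis .
  qed
  let ?P = "{\<tau>. \<tau> permutes {1..n}}"
  have finP: "finite ((\<lambda>\<tau>. cost M B n \<tau> \<mu> \<omega>) ` ?P)" by (simp add: finite_permutations)
  have neP: "(\<lambda>\<tau>. cost M B n \<tau> \<mu> \<omega>) ` ?P \<noteq> {}" using permutes_id by blast
  obtain \<tau>0 where t0: "\<tau>0 permutes {1..n}" and mn: "Min ((\<lambda>\<tau>. cost M B n \<tau> \<mu> \<omega>) ` ?P) = cost M B n \<tau>0 \<mu> \<omega>"
    using Min_in[OF finP neP] by auto
  have "cost M B n id \<mu> \<omega> / cost M B n \<tau>0 \<mu> \<omega> \<le> 2 + 2 * R"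
  proof (cases "cost M B n \<tau>0 \<mu> \<omega> = 0")
    case True then show ?thesis using R0 by simp
  next
    case False
    then have pos: "0 < cost M B n \<tau>0 \<mu> \<omega>" using cost_nonneg[of \<tau>0] by simp
    have "cost M B n id \<mu> \<omega> \<le> (2 + 2 * R) * cost M B n \<tau>0 \<mu> \<omega>" by (rule cost_cmp[OF t0 R0 ET])
    then show ?thesis using pos by (simp add: divide_le_eq)
  qed
  then show ?thesis unfolding mn rr R_def .
qed

end


theorem theorem3p4:
  fixes M :: "'a measure" and N :: "'b measure"
    and B :: "nat \<Rightarrow> 'a \<Rightarrow> real" and n :: nat and \<omega> :: real
    and \<mu> :: "nat \<Rightarrow> real" and f g h :: "nat \<Rightarrow> real \<Rightarrow> real" and p :: "nat \<Rightarrow> real"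
    and A J :: "nat \<Rightarrow> 'b \<Rightarrow> real"
  assumes "prob_space M"
    and "n \<ge> 1"
    and B_rv: "\<And>i. i \<in> {1..n} \<Longrightarrow> B i \<in> borel_measurable M"
    and B_indep: "prob_space.indep_vars M (\<lambda>_. borel) B {1..n}"
    and B_mean: "\<And>i. i \<in> {1..n} \<Longrightarrow> integrable M (B i)"
    and B_var: "\<And>i. i \<in> {1..n} \<Longrightarrow> integrable M (\<lambda>s. (B i s)\<^sup>2)"
    and \<mu>_def: "\<And>i. \<mu> i = (\<integral>s. B i s \<partial>M)"
    and \<omega>: "0 < \<omega>" "\<omega> < 1"
    and dil: "\<And>i. i \<in> {1..<n} \<Longrightarrow> dil_le M (B i) M (B (Suc i))"
    and f_nonneg: "\<And>i x. i \<in> {1..n} \<Longrightarrow> 0 \<le> f i x"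
    and f_meas: "\<And>i. i \<in> {1..n} \<Longrightarrow> f i \<in> borel_measurable borel"
    and f_dens: "\<And>i. i \<in> {1..n} \<Longrightarrow>
        distributed M lborel (\<lambda>s. B i s - \<mu> i) (\<lambda>x. ennreal (f i x))"
    and g_def: "\<And>i x. g i x = min (f i x) (f i (- x))"
    and h_def: "\<And>i x. h i x = f i x - g i x"
    and p_def: "\<And>i. p i = (\<integral>x. h i x \<partial>lborel)"
    and "prob_space N"
    and AJ_rv: "\<And>i. i \<in> {1..n} \<Longrightarrow> A i \<in> borel_measurable N \<and> J i \<in> borel_measurable N"
    and AJ_indep: "prob_space.indep_vars N (\<lambda>_. borel) (\<lambda>i s. (A i s, J i s)) {1..n}"
    and A_J_indep: "\<And>i. i \<in> {1..n} \<Longrightarrow> prob_space.indep_var N borel (A i) borel (J i)"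
    and A_dens: "\<And>i. i \<in> {1..n} \<Longrightarrow> p i > 0 \<Longrightarrow>
        distributed N lborel (A i) (\<lambda>x. ennreal (h i x / p i))"
    and J_bern: "\<And>i. i \<in> {1..n} \<Longrightarrow> (AE s in N. J i s = 0 \<or> J i s = 1)"
    and J_prob: "\<And>i. i \<in> {1..n} \<Longrightarrow> measure N {s \<in> space N. J i s = 1} = p i"
  shows "cost M B n id \<mu> \<omega> / Min ((\<lambda>\<tau>. cost M B n \<tau> \<mu> \<omega>) ` {\<tau>. \<tau> permutes {1..n}})
         \<le> 2 + 2 * Max ((\<lambda>k. (\<integral>s. \<bar>\<Sum>i=1..k. A i s * J i s\<bar> \<partial>N)
                             / (\<integral>s. \<bar>\<Sum>i=1..k. B i s - \<mu> i\<bar> \<partial>M)) ` {1..n})"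
proof -
  interpret appt M N B n \<omega> \<mu> f g h p A J
    using assms unfolding appt_def appt_axioms_def by blast
  show ?thesis by (rule main)
qed

end
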